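(* Fix $0<p<1$ and set $\alpha=\max\{p,1-p\}$. Then: (1) The series $K_\infty=\sum_{n=0}^\infty D_nE_n$ converges in operator norm on $L^2(\mu_p)$, and for every $m\ge0$, $$\|K_\infty-K_m\|\le\sum_{n=m+1}^\infty\alpha^n=\frac{\alpha^{m+1}}{1-\alpha}.$$ In particular $K_\infty$ is compact, positive, and self-adjoint. (2) Writing $\lambda_{\max}(T)$ for the top eigenvalue of a compact positive self-adjoint operator $T$, one has $\lambda_{\max}(K_m)\to\lambda_{\max}(K_\infty)$ and $|\lambda_{\max}(K_\infty)-\lambda_{\max}(K_m)|\le\frac{\alpha^{m+1}}{1-\alpha}$.
   Context: Let $S_0(x)=x/3$, $S_2(x)=(x+2)/3$ on $[0,1]$ and let $C$ be the middle-third Cantor set. For $0<p<1$, $\mu_p$ is the unique Borel probability measure on $[0,1]$ with $\mu_p=p\,\mu_p\circ S_0^{-1}+(1-p)\,\mu_p\circ S_2^{-1}$. For words $w\in\{0,2\}^n$, $|w|=n$, $S_w=S_{w_1}\circ\cdots\circ S_{w_n}$, $C_w=S_w(C)$. Inner product $\langle f,g\rangle=\int\overline fg\,d\mu_p$. $E_n$ is the conditional expectation onto the $\sigma$-algebra generated by $\{C_w:|w|=n\}$; $D_n$ is multiplication by $\sum_{|w|=n}\mu_p(C_w)1_{C_w}$. $K_mf=\sum_{|u|\le m}\langle1_{C_u},f\rangle1_{C_u}$. *)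

theory Defs
  imports "HOL-Probability.Probability"
begin

definition cS0 :: "real \<Rightarrow> real" where "cS0 x = x / 3"
definition cS2 :: "real \<Rightarrow> real" where "cS2 x = (x + 2) / 3"

definition cSd :: "nat \<Rightarrow> real \<Rightarrow> real" where
  "cSd d = (if d = 0 then cS0 else cS2)"

definition cSw :: "nat list \<Rightarrow> real \<Rightarrow> real" where
  "cSw w = foldr (\<lambda>d f. cSd d \<circ> f) w id"

definition words :: "nat \<Rightarrow> nat list set" where
  "words n = {w. length w = n \<and> set w \<subseteq> {0, 2}}"

definition words_le :: "nat \<Rightarrow> nat list set" where
  "words_le m = {w. length w \<le> m \<and> set w \<subseteq> {0, 2}}"

definition cantor_set :: "real set" where
  "cantor_set = (\<Inter>n. \<Union>w\<in>words n. cSw w ` {0..1})"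

definition cyl :: "nat list \<Rightarrow> real set" where
  "cyl w = cSw w ` cantor_set"

definition is_mu_p :: "real \<Rightarrow> real measure \<Rightarrow> bool" where
  "is_mu_p p M \<longleftrightarrow> prob_space M \<and> sets M = sets (restrict_space borel {0..1::real}) \<and>
     (\<forall>A\<in>sets M. emeasure M A =
        ennreal p * emeasure M (cS0 -` A \<inter> {0..1}) + ennreal (1 - p) * emeasure M (cS2 -` A \<inter> {0..1}))"

section \<open>L^2(mu) as square-integrable complex functions (modulo null functions)\<close>

type_synonym op = "(real \<Rightarrow> complex) \<Rightarrow> real \<Rightarrow> complex"

definition L2 :: "real measure \<Rightarrow> (real \<Rightarrow> complex) set" where
  "L2 M = {f. f \<in> borel_measurable M \<and> integrable M (\<lambda>x. (cmod (f x))\<^sup>2)}"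

definition l2norm :: "real measure \<Rightarrow> (real \<Rightarrow> complex) \<Rightarrow> real" where
  "l2norm M f = sqrt (LINT x|M. (cmod (f x))\<^sup>2)"

definition ip :: "real measure \<Rightarrow> (real \<Rightarrow> complex) \<Rightarrow> (real \<Rightarrow> complex) \<Rightarrow> complex" where
  "ip M f g = (LINT x|M. cnj (f x) * g x)"

definition ind :: "nat list \<Rightarrow> real \<Rightarrow> complex" where
  "ind w = indicator (cyl w)"

definition Kop :: "real measure \<Rightarrow> nat \<Rightarrow> op" where
  "Kop M m f = (\<lambda>x. \<Sum>u\<in>words_le m. ip M (ind u) f * ind u x)"

text \<open>Conditional expectation onto the (finite, atomic) sigma-algebra generated by the
  level-n cylinders C_w, |w| = n (all of positive measure, covering C of full measure).\<close>
definition Eop :: "real measure \<Rightarrow> nat \<Rightarrow> op" where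
  "Eop M n f = (\<lambda>x. \<Sum>w\<in>words n. (ip M (ind w) f / complex_of_real (measure M (cyl w))) * ind w x)"

definition Dop :: "real measure \<Rightarrow> nat \<Rightarrow> op" where
  "Dop M n g = (\<lambda>x. (\<Sum>w\<in>words n. complex_of_real (measure M (cyl w)) * ind w x) * g x)"

definition DE_partial :: "real measure \<Rightarrow> nat \<Rightarrow> op" where
  "DE_partial M m f = (\<lambda>x. \<Sum>n\<le>m. Dop M n (Eop M n f) x)"

definition op_diff :: "op \<Rightarrow> op \<Rightarrow> op" where
  "op_diff T U f = (\<lambda>x. T f x - U f x)"

definition opnorm :: "real measure \<Rightarrow> op \<Rightarrow> real" where
  "opnorm M T = Sup {l2norm M (T f) | f. f \<in> L2 M \<and> l2norm M f \<le> 1}"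

definition bounded_lin_op :: "real measure \<Rightarrow> op \<Rightarrow> bool" where
  "bounded_lin_op M T \<longleftrightarrow>
     (\<forall>f\<in>L2 M. T f \<in> L2 M) \<and>
     (\<forall>f\<in>L2 M. \<forall>g\<in>L2 M. \<forall>c. l2norm M (\<lambda>x. T (\<lambda>y. c * f y + g y) x - (c * T f x + T g x)) = 0) \<and>
     (\<exists>B. \<forall>f\<in>L2 M. l2norm M (T f) \<le> B * l2norm M f)"

definition compact_op :: "real measure \<Rightarrow> op \<Rightarrow> bool" where
  "compact_op M T \<longleftrightarrow>
     (\<forall>F :: nat \<Rightarrow> real \<Rightarrow> complex. (\<forall>k. F k \<in> L2 M \<and> l2norm M (F k) \<le> 1) \<longrightarrow>
        (\<exists>r g. strict_mono r \<and> g \<in> L2 M \<and>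
           (\<lambda>k. l2norm M (\<lambda>x. T (F (r k)) x - g x)) \<longlonglongrightarrow> 0))"

definition positive_op :: "real measure \<Rightarrow> op \<Rightarrow> bool" where
  "positive_op M T \<longleftrightarrow> (\<forall>f\<in>L2 M. Im (ip M f (T f)) = 0 \<and> Re (ip M f (T f)) \<ge> 0)"

definition selfadjoint_op :: "real measure \<Rightarrow> op \<Rightarrow> bool" where
  "selfadjoint_op M T \<longleftrightarrow> (\<forall>f\<in>L2 M. \<forall>g\<in>L2 M. ip M (T f) g = ip M f (T g))"

definition is_eigenvalue :: "real measure \<Rightarrow> op \<Rightarrow> real \<Rightarrow> bool" where
  "is_eigenvalue M T l \<longleftrightarrow>
     (\<exists>f\<in>L2 M. l2norm M f \<noteq> 0 \<and> l2norm M (\<lambda>x. T f x - complex_of_real l * f x) = 0)"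

definition lambda_max :: "real measure \<Rightarrow> op \<Rightarrow> real" where
  "lambda_max M T = (GREATEST l. is_eigenvalue M T l)"

end

theory Submission
  imports Defs "HOL-Library.Diagonal_Subsequence"
begin

lemma cSw_Nil[simp]: "cSw [] = id" by (simp add: cSw_def)
lemma cSw_Cons[simp]: "cSw (d#w) = cSd d \<circ> cSw w" by (simp add: cSw_def)

lemma cSd_01: "x \<in> {0..1} \<Longrightarrow> cSd d x \<in> {0..1}"
  by (auto simp: cSd_def cS0_def cS2_def)

lemma cSw_01: "x \<in> {0..1} \<Longrightarrow> cSw w x \<in> {0..1}"
proof (induction w)
  case (Cons d w)
  then show ?case using cSd_01[of "cSw w x" d] by simp
qed simp

lemma cSd_inj: "inj (cSd d)"
  by (auto simp: inj_def cSd_def cS0_def cS2_def)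

lemma cSw_inj: "inj (cSw w)"
proof (induction w)
  case (Cons d w)
  have "inj (cSd d \<circ> cSw w)" by (rule inj_compose[OF cSd_inj Cons.IH])
  then show ?case by (simp only: cSw_Cons)
qed simp

lemma cSw_cont: "continuous_on UNIV (cSw w)"
proof (induction w)
  case Nil then show ?case by simp
next
  case (Cons d w)
  have c0: "continuous_on UNIV cS0" unfolding cS0_def by (intro continuous_intros) simp
  have c2: "continuous_on UNIV cS2" unfolding cS2_def by (intro continuous_intros) simp
  have "continuous_on UNIV (cSd d)" using c0 c2 by (simp add: cSd_def)
  then have "continuous_on UNIV (cSd d \<circ> cSw w)"
    by (intro continuous_on_compose Cons.IH) (rule continuous_on_subset, auto)
  then show ?case by (simp only: cSw_Cons)
qed

lemma cantor_sub: "cantor_set \<subseteq> {0..1}"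
proof -
  have "words 0 = {[]}" by (auto simp: words_def)
  have "cantor_set \<subseteq> (\<Union>w\<in>words 0. cSw w ` {0..1})" unfolding cantor_set_def by (rule INT_lower) simp
  then show ?thesis using \<open>words 0 = {[]}\<close> by simp
qed

lemma finite_words: "finite (words n)"
proof -
  have "words n \<subseteq> {w. set w \<subseteq> {0,2} \<and> length w = n}" by (auto simp: words_def)
  moreover have "finite {w. set w \<subseteq> {0::nat,2} \<and> length w = n}"
    by (rule finite_lists_length_eq) simp
  ultimately show ?thesis by (rule finite_subset)
qed

lemma compact_img: "compact (cSw w ` {0..1})"
  by (rule compact_continuous_image[OF continuous_on_subset[OF cSw_cont] compact_Icc]) simp

lemma compact_cantor: "compact cantor_set"
proof -
  have "closed cantor_set" unfolding cantor_set_def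
  proof (rule closed_INT, rule ballI)
    fix n
    show "closed (\<Union>w\<in>words n. cSw w ` {0..1})"
      by (rule closed_UN[OF finite_words]) (simp add: compact_imp_closed compact_img)
  qed
  moreover have "bounded cantor_set" using cantor_sub bounded_subset[OF compact_imp_bounded[OF compact_Icc]] by blast
  ultimately show ?thesis by (simp add: compact_eq_bounded_closed)
qed

lemma compact_cyl: "compact (cyl w)"
  unfolding cyl_def
  by (rule compact_continuous_image[OF continuous_on_subset[OF cSw_cont] compact_cantor]) simp

lemma cyl_sub: "cyl w \<subseteq> {0..1}"
  using cantor_sub cSw_01 unfolding cyl_def by blast

lemma cyl_Cons: "cyl (d#w) = cSd d ` cyl w"
  by (simp add: cyl_def image_comp)

lemma disj01:
  "length u = length v \<Longrightarrow> set u \<subseteq> {0,2} \<Longrightarrow> set v \<subseteq> {0,2} \<Longrightarrow> u \<noteq> v \<Longrightarrow>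
   cSw u ` {0..1} \<inter> cSw v ` {0..1} = {}"
proof (induction u arbitrary: v)
  case Nil then show ?case by simp
next
  case (Cons d u)
  then obtain e v' where v: "v = e # v'" by (cases v) auto
  have ia: "cSw (d#u) ` {0..1} = cSd d ` (cSw u ` {0..1})" by (simp add: image_comp)
  have ib: "cSw (e#v') ` {0..1} = cSd e ` (cSw v' ` {0..1})" by (simp add: image_comp)
  show ?case
  proof (cases "d = e")
    case True
    then have "u \<noteq> v'" using Cons v by auto
    then have "cSw u ` {0..1} \<inter> cSw v' ` {0..1} = {}" using Cons v by auto
    then have "cSd d ` (cSw u ` {0..1}) \<inter> cSd d ` (cSw v' ` {0..1}) = {}"
      using image_Int[OF cSd_inj, of d, symmetric] by simp
    then show ?thesis using True v ia ib by simp
  next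
    case False
    then have de: "(d = 0 \<and> e = 2) \<or> (d = 2 \<and> e = 0)" using Cons v by auto
    have sa: "cSw u ` {0..1} \<subseteq> {0..1}" "cSw v' ` {0..1} \<subseteq> {0..1}" using cSw_01 by auto
    have b1: "cSd 0 ` X \<subseteq> {..1/3}" if "X \<subseteq> {0..1}" for X using that by (auto simp: cSd_def cS0_def)
    have b2: "cSd 2 ` X \<subseteq> {2/3..}" if "X \<subseteq> {0..1}" for X using that by (auto simp: cSd_def cS2_def)
    have b: "{..1/3::real} \<inter> {2/3..} = {}" by auto
    from de show ?thesis
    proof (elim disjE conjE)
      assume "d = 0" "e = 2"
      then show ?thesis using b1[OF sa(1)] b2[OF sa(2)] b ia ib v by blast
    next
      assume "d = 2" "e = 0"
      then show ?thesis using b2[OF sa(1)] b1[OF sa(2)] b ia ib v by blast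
    qed
  qed
qed

lemma cyl_disj: "u \<in> words n \<Longrightarrow> v \<in> words n \<Longrightarrow> u \<noteq> v \<Longrightarrow> cyl u \<inter> cyl v = {}"
proof -
  assume u: "u \<in> words n" and v: "v \<in> words n" and uv: "u \<noteq> v"
  have a: "cyl u \<subseteq> cSw u ` {0..1}" "cyl v \<subseteq> cSw v ` {0..1}"
    unfolding cyl_def using cantor_sub by (rule image_mono)+
  have "cSw u ` {0..1} \<inter> cSw v ` {0..1} = {}"
    using u v uv by (intro disj01) (auto simp: words_def)
  then show ?thesis using a by blast
qed

locale mup =
  fixes p :: real and M :: "real measure"
  assumes p0: "0 < p" and p1: "p < 1" and mu: "is_mu_p p M"
begin

sublocale prob_space M using mu by (simp add: is_mu_p_def)

lemma sets_M: "sets M = sets (restrict_space borel {0..1::real})"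
  using mu by (simp add: is_mu_p_def)

lemma space_M: "space M = {0..1}"
  using sets_eq_imp_space_eq[OF sets_M] by (simp add: space_restrict_space)

lemma selfsim: "A \<in> sets M \<Longrightarrow> emeasure M A =
  ennreal p * emeasure M (cS0 -` A \<inter> {0..1}) + ennreal (1 - p) * emeasure M (cS2 -` A \<inter> {0..1})"
  using mu by (simp add: is_mu_p_def)

lemma sets_M_iff: "A \<in> sets M \<longleftrightarrow> A \<subseteq> {0..1} \<and> A \<in> sets borel"
  unfolding sets_M by (rule sets_restrict_space_iff) simp

lemma cyl_sets[measurable]: "cyl w \<in> sets M"
  unfolding sets_M_iff using cyl_sub compact_cyl by (simp add: borel_closed compact_imp_closed)

abbreviation "a \<equiv> max p (1 - p)"

definition wt :: "nat \<Rightarrow> real" where "wt d = (if d = 0 then p else 1 - p)"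

lemma emeasure_cyl_Cons: "emeasure M (cyl (d#w)) = ennreal (wt d) * emeasure M (cyl w)"
proof -
  have A: "cyl (d#w) \<in> sets M" by (rule cyl_sets)
  have sub: "cyl w \<subseteq> {0..1}" by (rule cyl_sub)
  show ?thesis
  proof (cases "d = 0")
    case True
    have e1: "cS0 -` cyl (d#w) \<inter> {0..1} = cyl w"
      using True sub inj_vimage_image_eq[OF cSd_inj[of 0]] by (auto simp: cyl_Cons cSd_def)
    have e2: "cS2 -` cyl (d#w) \<inter> {0..1} = {}"
    proof -
      { fix x assume x: "x \<in> {0..1::real}" "cS2 x \<in> cyl (d#w)"
        then obtain y where "y \<in> cyl w" "cS2 x = cS0 y" using True by (auto simp: cyl_Cons cSd_def)
        then have "y \<in> {0..1}" using sub by auto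
        then have False using x \<open>cS2 x = cS0 y\<close> by (auto simp: cS0_def cS2_def) }
      then show ?thesis by blast
    qed
    show ?thesis using selfsim[OF A] e1 e2 True by (simp add: wt_def)
  next
    case False
    have e1: "cS2 -` cyl (d#w) \<inter> {0..1} = cyl w"
      using False sub inj_vimage_image_eq[OF cSd_inj[of 2]] by (auto simp: cyl_Cons cSd_def)
    have e2: "cS0 -` cyl (d#w) \<inter> {0..1} = {}"
    proof -
      { fix x assume x: "x \<in> {0..1::real}" "cS0 x \<in> cyl (d#w)"
        then obtain y where "y \<in> cyl w" "cS0 x = cS2 y" using False by (auto simp: cyl_Cons cSd_def)
        then have "y \<in> {0..1}" using sub by auto
        then have False using x \<open>cS0 x = cS2 y\<close> by (auto simp: cS0_def cS2_def) }
      then show ?thesis by blast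
    qed
    show ?thesis using selfsim[OF A] e1 e2 False by (simp add: wt_def)
  qed
qed

lemma measure_cyl_Cons: "measure M (cyl (d#w)) = wt d * measure M (cyl w)"
proof -
  have "0 \<le> wt d" using p0 p1 by (simp add: wt_def)
  then show ?thesis using emeasure_cyl_Cons[of d w]
    by (simp add: emeasure_eq_measure ennreal_mult[symmetric] measure_nonneg)
qed

lemma measure_cyl_le: "measure M (cyl w) \<le> a ^ length w"
proof (induction w)
  case Nil then show ?case by simp
next
  case (Cons d w)
  have "wt d \<le> a" "0 \<le> wt d" using p0 p1 by (auto simp: wt_def)
  then have "wt d * measure M (cyl w) \<le> a * a ^ length w"
    using Cons by (intro mult_mono) (auto simp: measure_nonneg)
  then show ?case by (simp add: measure_cyl_Cons)
qed

lemma a_lt1: "a < 1" and a_pos: "0 < a" and a_half: "1/2 \<le> a"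
  using p0 p1 by (auto simp: max_def)

end

lemma borel_measurable_cnj[measurable (raw)]:
  "f \<in> borel_measurable M \<Longrightarrow> (\<lambda>x. cnj (f x)) \<in> borel_measurable M"
  by (intro borel_measurable_continuous_on[of cnj f] continuous_intros)

context mup
begin

abbreviation N where "N \<equiv> l2norm M"

lemma L2_iff: "f \<in> L2 M \<longleftrightarrow> f \<in> borel_measurable M \<and> integrable M (\<lambda>x. (cmod (f x))\<^sup>2)"
  by (simp add: L2_def)

lemma N_nonneg: "0 \<le> N f" by (simp add: l2norm_def)

lemma N_sq: "f \<in> L2 M \<Longrightarrow> (N f)\<^sup>2 = (\<integral>x. (cmod (f x))\<^sup>2 \<partial>M)"
  by (simp add: l2norm_def)

lemma N_sq': "(N f)\<^sup>2 = (\<integral>x. (cmod (f x))\<^sup>2 \<partial>M)"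
  by (simp add: l2norm_def)

lemma L2_bounded:
  assumes [measurable]: "f \<in> borel_measurable M" and b: "\<And>x. x \<in> space M \<Longrightarrow> cmod (f x) \<le> B"
  shows "f \<in> L2 M"
proof -
  have "integrable M (\<lambda>x. (cmod (f x))\<^sup>2)"
  proof (rule integrable_const_bound[where B="B\<^sup>2"])
    show "AE x in M. norm ((cmod (f x))\<^sup>2) \<le> B\<^sup>2"
      using b by (intro AE_I2) (simp add: power_mono)
  qed simp
  then show ?thesis by (simp add: L2_def)
qed

lemma L2_meas[measurable_dest]: "f \<in> L2 M \<Longrightarrow> f \<in> borel_measurable M" by (simp add: L2_def)
lemma L2_int: "f \<in> L2 M \<Longrightarrow> integrable M (\<lambda>x. (cmod (f x))\<^sup>2)" by (simp add: L2_def)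

lemma sq_add_le: "(cmod (u + v))\<^sup>2 \<le> 2 * (cmod u)\<^sup>2 + 2 * (cmod v)\<^sup>2"
proof -
  have "cmod (u + v) \<le> cmod u + cmod v" by (rule norm_triangle_ineq)
  then have "(cmod (u + v))\<^sup>2 \<le> (cmod u + cmod v)\<^sup>2" by (simp add: power_mono)
  also have "\<dots> \<le> 2 * (cmod u)\<^sup>2 + 2 * (cmod v)\<^sup>2"
  proof -
    have "0 \<le> (cmod u - cmod v)\<^sup>2" by simp
    then show ?thesis unfolding power2_sum power2_diff by linarith
  qed
  finally show ?thesis .
qed

lemma L2_add: assumes "f \<in> L2 M" "g \<in> L2 M" shows "(\<lambda>x. f x + g x) \<in> L2 M"
proof -
  have [measurable]: "f \<in> borel_measurable M" "g \<in> borel_measurable M" using assms by (auto simp: L2_def)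
  have "integrable M (\<lambda>x. 2 * (cmod (f x))\<^sup>2 + 2 * (cmod (g x))\<^sup>2)"
    using assms by (auto simp: L2_def)
  then have "integrable M (\<lambda>x. (cmod (f x + g x))\<^sup>2)"
  proof (rule Bochner_Integration.integrable_bound)
    show "AE x in M. norm ((cmod (f x + g x))\<^sup>2) \<le> norm (2 * (cmod (f x))\<^sup>2 + 2 * (cmod (g x))\<^sup>2)"
    proof (rule AE_I2)
      fix x
      have "(cmod (f x + g x))\<^sup>2 \<le> 2 * (cmod (f x))\<^sup>2 + 2 * (cmod (g x))\<^sup>2" by (rule sq_add_le)
      then show "norm ((cmod (f x + g x))\<^sup>2) \<le> norm (2 * (cmod (f x))\<^sup>2 + 2 * (cmod (g x))\<^sup>2)"
        by simp
    qed
  qed simp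
  then show ?thesis by (simp add: L2_def)
qed

lemma L2_scale: assumes "f \<in> L2 M" shows "(\<lambda>x. c * f x) \<in> L2 M"
proof -
  have [measurable]: "f \<in> borel_measurable M" using assms by (auto simp: L2_def)
  have "integrable M (\<lambda>x. (cmod c)\<^sup>2 * (cmod (f x))\<^sup>2)" using assms by (auto simp: L2_def)
  then show ?thesis by (simp add: L2_def norm_mult power_mult_distrib)
qed

lemma L2_minus: assumes "f \<in> L2 M" shows "(\<lambda>x. - f x) \<in> L2 M"
  using L2_scale[OF assms, of "-1"] by simp

lemma L2_diff: assumes "f \<in> L2 M" "g \<in> L2 M" shows "(\<lambda>x. f x - g x) \<in> L2 M"
  using L2_add[OF assms(1) L2_minus[OF assms(2)]] by simp

lemma L2_zero: "(\<lambda>x. 0) \<in> L2 M" by (rule L2_bounded[where B=0]) auto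

lemma L2_const: "(\<lambda>x. c) \<in> L2 M" by (rule L2_bounded[where B="cmod c"]) auto

lemma L2_sum: "(\<And>i. i \<in> I \<Longrightarrow> f i \<in> L2 M) \<Longrightarrow> (\<lambda>x. \<Sum>i\<in>I. f i x) \<in> L2 M"
proof (induction I rule: infinite_finite_induct)
  case (infinite A) then show ?case by (simp add: L2_zero)
next
  case empty then show ?case by (simp add: L2_zero)
next
  case (insert i I) then show ?case by (simp add: L2_add)
qed

lemma int_prod: assumes "f \<in> L2 M" "g \<in> L2 M" shows "integrable M (\<lambda>x. cnj (f x) * g x)"
proof -
  have [measurable]: "f \<in> borel_measurable M" "g \<in> borel_measurable M" using assms by (auto simp: L2_def)
  have "integrable M (\<lambda>x. (cmod (f x))\<^sup>2 + (cmod (g x))\<^sup>2)"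
    using assms by (auto simp: L2_def)
  moreover have "norm (cnj (f x) * g x) \<le> norm ((cmod (f x))\<^sup>2 + (cmod (g x))\<^sup>2)" for x
  proof -
    have "norm (cnj (f x) * g x) = cmod (f x) * cmod (g x)" by (simp add: norm_mult)
    also have "\<dots> \<le> (cmod (f x))\<^sup>2 + (cmod (g x))\<^sup>2"
    proof -
      have "0 \<le> (cmod (f x) - cmod (g x))\<^sup>2" by simp
      moreover have "0 \<le> cmod (f x) * cmod (g x)" by simp
      ultimately show ?thesis unfolding power2_diff by linarith
    qed
    finally show ?thesis by simp
  qed
  note pw = this
  show ?thesis
  proof (rule Bochner_Integration.integrable_bound[OF calculation])
    show "(\<lambda>x. cnj (f x) * g x) \<in> borel_measurable M" by measurable
    show "AE x in M. norm (cnj (f x) * g x) \<le> norm ((cmod (f x))\<^sup>2 + (cmod (g x))\<^sup>2)"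
      by (rule AE_I2) (rule pw)
  qed
qed

lemma int_L1: assumes "f \<in> L2 M" shows "integrable M f"
  using int_prod[OF L2_const[of 1] assms] by simp

lemma ip_add: "f \<in> L2 M \<Longrightarrow> g \<in> L2 M \<Longrightarrow> h \<in> L2 M \<Longrightarrow>
   ip M f (\<lambda>x. g x + h x) = ip M f g + ip M f h"
  unfolding ip_def by (simp add: distrib_left int_prod)

lemma ip_diff: "f \<in> L2 M \<Longrightarrow> g \<in> L2 M \<Longrightarrow> h \<in> L2 M \<Longrightarrow>
   ip M f (\<lambda>x. g x - h x) = ip M f g - ip M f h"
  unfolding ip_def by (simp add: right_diff_distrib int_prod)

lemma ip_scale: "ip M f (\<lambda>x. c * g x) = c * ip M f g"
  unfolding ip_def by (simp add: ac_simps)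

lemma ip_scale_l: "ip M (\<lambda>x. c * f x) g = cnj c * ip M f g"
  unfolding ip_def by (simp add: ac_simps)

lemma ip_sym: "ip M g f = cnj (ip M f g)"
proof -
  have "cnj (ip M f g) = (\<integral>x. cnj (cnj (f x) * g x) \<partial>M)" unfolding ip_def by (rule Bochner_Integration.integral_cnj[symmetric])
  also have "\<dots> = ip M g f" unfolding ip_def by (simp add: mult.commute)
  finally show ?thesis by simp
qed

lemma ip_self: "f \<in> L2 M \<Longrightarrow> ip M f f = complex_of_real ((N f)\<^sup>2)"
proof -
  assume "f \<in> L2 M"
  have "cnj (f x) * f x = complex_of_real ((cmod (f x))\<^sup>2)" for x
    by (metis complex_norm_square mult.commute of_real_power)
  then have "(\<lambda>x. cnj (f x) * f x) = (\<lambda>x. complex_of_real ((cmod (f x))\<^sup>2))" by (rule ext)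
  then show ?thesis unfolding ip_def N_sq' by (simp only: integral_complex_of_real)
qed

lemma ip_sum: "finite I \<Longrightarrow> f \<in> L2 M \<Longrightarrow> (\<And>i. i \<in> I \<Longrightarrow> g i \<in> L2 M) \<Longrightarrow>
   ip M f (\<lambda>x. \<Sum>i\<in>I. g i x) = (\<Sum>i\<in>I. ip M f (g i))"
  unfolding ip_def by (simp add: sum_distrib_left int_prod integral_sum)

lemma real_cs:
  fixes X A B :: real
  assumes A: "0 \<le> A" and B: "0 \<le> B" and h: "\<And>t. t > 0 \<Longrightarrow> X \<le> (t * A + B / t) / 2"
  shows "X \<le> sqrt A * sqrt B"
proof (cases "A > 0 \<and> B > 0")
  case True
  define t where "t = sqrt B / sqrt A"
  have t: "t > 0" using True by (simp add: t_def)
  have sA: "sqrt A * sqrt A = A" "sqrt B * sqrt B = B" using A B by simp_all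
  have pA: "sqrt A > 0" using True by simp
  have "t * A = sqrt A * sqrt B" unfolding t_def using pA
    by (subst sA(1)[symmetric]) (simp add: field_simps)
  moreover have "B / t = sqrt A * sqrt B" unfolding t_def using pA True
    by (subst sA(2)[symmetric]) (simp add: field_simps)
  ultimately show ?thesis using h[OF t] by simp
next
  case False
  then have "A = 0 \<or> B = 0" using A B by auto
  then show ?thesis
  proof
    assume A0: "A = 0"
    show ?thesis
    proof (rule ccontr)
      assume "\<not> ?thesis"
      then have X: "X > 0" using A0 by simp
      have "X \<le> B / ((B + 1) / X) / 2" using h[of "(B+1)/X"] X B A0 by simp
      also have "\<dots> = B * X / (2 * (B + 1))" using X B by (simp add: field_simps)
      also have "\<dots> < X"
      proof -
        have e: "X * (2 * (B + 1)) - B * X = X * (B + 2)" by (simp add: algebra_simps)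
        have "X * (B + 2) > 0" using X B by simp
        then have "B * X < X * (2 * (B + 1))" using e by linarith
        then show ?thesis using B by (simp add: divide_less_eq)
      qed
      finally show False by simp
    qed
  next
    assume B0: "B = 0"
    show ?thesis
    proof (rule ccontr)
      assume "\<not> ?thesis"
      then have X: "X > 0" using B0 by simp
      have "X \<le> (X / (A + 1)) * A / 2" using h[of "X/(A+1)"] X A B0 by simp
      also have "\<dots> = X * A / (2 * (A + 1))" by simp
      also have "\<dots> < X"
      proof -
        have e: "X * (2 * (A + 1)) - X * A = X * (A + 2)" by (simp add: algebra_simps)
        have "X * (A + 2) > 0" using X A by simp
        then have "X * A < X * (2 * (A + 1))" using e by linarith
        then show ?thesis using A by (simp add: divide_less_eq)
      qed
      finally show False by simp
    qed
  qed
qed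

lemma CS: assumes f: "f \<in> L2 M" and g: "g \<in> L2 M" shows "cmod (ip M f g) \<le> N f * N g"
proof -
  have [measurable]: "f \<in> borel_measurable M" "g \<in> borel_measurable M" using assms by (auto simp: L2_def)
  have i1: "integrable M (\<lambda>x. cmod (f x) * cmod (g x))"
    using integrable_norm[OF int_prod[OF f g]] by (simp add: norm_mult)
  have "cmod (ip M f g) \<le> (\<integral>x. cmod (cnj (f x) * g x) \<partial>M)" unfolding ip_def by (rule integral_norm_bound)
  also have "\<dots> = (\<integral>x. cmod (f x) * cmod (g x) \<partial>M)" by (simp add: norm_mult)
  also have "\<dots> \<le> sqrt ((N f)\<^sup>2) * sqrt ((N g)\<^sup>2)"
  proof (rule real_cs)
    fix t :: real assume t: "t > 0"
    have pw: "cmod (f x) * cmod (g x) \<le> (t * (cmod (f x))\<^sup>2 + (cmod (g x))\<^sup>2 / t) / 2" for x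
    proof -
      have "0 \<le> (t * cmod (f x) - cmod (g x))\<^sup>2" by simp
      then have "2 * t * (cmod (f x) * cmod (g x)) \<le> t * (t * (cmod (f x))\<^sup>2) + (cmod (g x))\<^sup>2"
        by (simp add: power2_eq_square algebra_simps)
      then show ?thesis using t by (simp add: field_simps power2_eq_square)
    qed
    have "(\<integral>x. cmod (f x) * cmod (g x) \<partial>M) \<le> (\<integral>x. (t * (cmod (f x))\<^sup>2 + (cmod (g x))\<^sup>2 / t) / 2 \<partial>M)"
      using f g i1 by (intro integral_mono pw) (auto simp: L2_def)
    also have "\<dots> = (t * (N f)\<^sup>2 + (N g)\<^sup>2 / t) / 2"
      using f g by (simp add: L2_def N_sq)
    finally show "(\<integral>x. cmod (f x) * cmod (g x) \<partial>M) \<le> (t * (N f)\<^sup>2 + (N g)\<^sup>2 / t) / 2" .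
  qed simp_all
  also have "\<dots> = N f * N g" by (simp add: N_nonneg)
  finally show ?thesis .
qed

lemma sq_expand: "(cmod (u + v))\<^sup>2 = (cmod u)\<^sup>2 + (cmod v)\<^sup>2 + 2 * Re (cnj u * v)"
  unfolding cmod_power2 by (simp add: power2_sum algebra_simps)

lemma N_add_sq: assumes f: "f \<in> L2 M" and g: "g \<in> L2 M"
  shows "(N (\<lambda>x. f x + g x))\<^sup>2 = (N f)\<^sup>2 + (N g)\<^sup>2 + 2 * Re (ip M f g)"
proof -
  have i: "integrable M (\<lambda>x. Re (cnj (f x) * g x))" by (rule integrable_Re[OF int_prod[OF f g]])
  have ia: "integrable M (\<lambda>x. (cmod (f x))\<^sup>2)" "integrable M (\<lambda>x. (cmod (g x))\<^sup>2)"
    using f g by (auto simp: L2_def)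
  have e: "(\<integral>x. Re (cnj (f x) * g x) \<partial>M) = Re (ip M f g)"
    unfolding ip_def by (rule integral_Re[OF int_prod[OF f g]])
  have "(N (\<lambda>x. f x + g x))\<^sup>2 = (\<integral>x. (cmod (f x))\<^sup>2 + (cmod (g x))\<^sup>2 + 2 * Re (cnj (f x) * g x) \<partial>M)"
    unfolding N_sq' sq_expand ..
  also have "\<dots> = (\<integral>x. (cmod (f x))\<^sup>2 + (cmod (g x))\<^sup>2 \<partial>M) + (\<integral>x. 2 * Re (cnj (f x) * g x) \<partial>M)"
    by (rule Bochner_Integration.integral_add[OF Bochner_Integration.integrable_add[OF ia] integrable_mult_right[OF i]])
  also have "\<dots> = (N f)\<^sup>2 + (N g)\<^sup>2 + 2 * Re (ip M f g)"
    unfolding Bochner_Integration.integral_add[OF ia] integral_mult_right_zero e N_sq' ..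
  finally show ?thesis .
qed

lemma N_add: assumes f: "f \<in> L2 M" and g: "g \<in> L2 M"
  shows "N (\<lambda>x. f x + g x) \<le> N f + N g"
proof -
  have "Re (ip M f g) \<le> N f * N g" using CS[OF f g] complex_Re_le_cmod order_trans by blast
  then have "(N (\<lambda>x. f x + g x))\<^sup>2 \<le> (N f + N g)\<^sup>2"
    using N_add_sq[OF f g] by (simp add: power2_eq_square algebra_simps)
  then show ?thesis by (rule power2_le_imp_le[OF _ add_nonneg_nonneg[OF N_nonneg N_nonneg]])
qed

lemma N_scale: "N (\<lambda>x. c * f x) = cmod c * N f"
proof -
  have "(N (\<lambda>x. c * f x))\<^sup>2 = (cmod c)\<^sup>2 * (N f)\<^sup>2"
    by (simp add: N_sq' norm_mult power_mult_distrib)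
  then have "(N (\<lambda>x. c * f x))\<^sup>2 = (cmod c * N f)\<^sup>2" by (simp add: power_mult_distrib)
  then show ?thesis using N_nonneg by (simp add: power2_eq_iff_nonneg)
qed

lemma N_minus: "N (\<lambda>x. - f x) = N f"
  using N_scale[of "-1" f] by simp

lemma N_diff: assumes f: "f \<in> L2 M" and g: "g \<in> L2 M"
  shows "N (\<lambda>x. f x - g x) \<le> N f + N g"
  using N_add[OF f L2_minus[OF g]] N_minus[of g] by simp

lemma N_cong: "(\<And>x. x \<in> space M \<Longrightarrow> f x = g x) \<Longrightarrow> N f = N g"
proof -
  assume h: "\<And>x. x \<in> space M \<Longrightarrow> f x = g x"
  have "(\<integral>x. (cmod (f x))\<^sup>2 \<partial>M) = (\<integral>x. (cmod (g x))\<^sup>2 \<partial>M)"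
    by (rule Bochner_Integration.integral_cong) (simp_all add: h)
  then show ?thesis unfolding l2norm_def by simp
qed

lemma N_tri: assumes f: "f \<in> L2 M" and g: "g \<in> L2 M" and h: "h \<in> L2 M"
  shows "N (\<lambda>x. f x - h x) \<le> N (\<lambda>x. f x - g x) + N (\<lambda>x. g x - h x)"
  using N_add[OF L2_diff[OF f g] L2_diff[OF g h]] by simp

lemma N_commute: "N (\<lambda>x. f x - g x) = N (\<lambda>x. g x - f x)"
  using N_minus[of "\<lambda>x. f x - g x"] by simp

lemma N_zero[simp]: "N (\<lambda>x. 0) = 0" by (simp add: l2norm_def)

lemma N_sum: "(\<And>i. i \<in> I \<Longrightarrow> f i \<in> L2 M) \<Longrightarrow> N (\<lambda>x. \<Sum>i\<in>I. f i x) \<le> (\<Sum>i\<in>I. N (f i))"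
proof (induction I rule: infinite_finite_induct)
  case (infinite A) then show ?case by simp
next
  case empty then show ?case by simp
next
  case (insert i I)
  have "N (\<lambda>x. \<Sum>i\<in>insert i I. f i x) = N (\<lambda>x. f i x + (\<Sum>i\<in>I. f i x))" using insert by simp
  also have "\<dots> \<le> N (f i) + N (\<lambda>x. \<Sum>i\<in>I. f i x)"
    using insert by (intro N_add L2_sum) auto
  also have "\<dots> \<le> N (f i) + (\<Sum>i\<in>I. N (f i))" using insert by simp
  finally show ?case using insert by simp
qed

lemma N_one: "N (\<lambda>x. 1) = 1" by (simp add: l2norm_def prob_space)

end

lemma collapse:
  fixes h :: "nat list \<Rightarrow> 'a::semiring_1"
  assumes x: "x \<in> cyl w0" and w0: "w0 \<in> words n"
  shows "(\<Sum>w\<in>words n. h w * indicator (cyl w) x) = h w0"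
proof -
  have "(\<Sum>w\<in>words n. h w * indicator (cyl w) x) =
        h w0 * indicator (cyl w0) x + (\<Sum>w\<in>words n - {w0}. h w * indicator (cyl w) x)"
    by (rule sum.remove[OF finite_words w0])
  also have "(\<Sum>w\<in>words n - {w0}. h w * indicator (cyl w) x) = 0"
  proof (rule sum.neutral, rule ballI)
    fix w assume "w \<in> words n - {w0}"
    then have "cyl w \<inter> cyl w0 = {}" using cyl_disj[of w n w0] w0 by auto
    then have "x \<notin> cyl w" using x by blast
    then show "h w * indicator (cyl w) x = 0" by simp
  qed
  finally show ?thesis using x by simp
qed

lemma collapse0:
  fixes h :: "nat list \<Rightarrow> 'a::semiring_1"
  assumes x: "\<forall>w\<in>words n. x \<notin> cyl w"
  shows "(\<Sum>w\<in>words n. h w * indicator (cyl w) x) = 0"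
  using x by (intro sum.neutral) auto

lemma collapse_ind:
  assumes x: "x \<in> cyl w0" and w0: "w0 \<in> words n"
  shows "(\<Sum>w\<in>words n. h w * ind w x) = h w0"
  unfolding ind_def using collapse[OF x w0] .

lemma collapse0_ind:
  assumes x: "\<forall>w\<in>words n. x \<notin> cyl w"
  shows "(\<Sum>w\<in>words n. h w * ind w x) = 0"
  unfolding ind_def using collapse0[OF x] .

context mup
begin

lemma ind_meas[measurable]: "ind w \<in> borel_measurable M"
  unfolding ind_def by (rule borel_measurable_indicator[OF cyl_sets])

lemma ind_L2: "ind w \<in> L2 M"
  by (rule L2_bounded[where B=1]) (auto simp: ind_def indicator_def)

lemma ind_sq: "ind w x * ind w x = ind w x" by (simp add: ind_def indicator_def)
lemma cnj_ind: "cnj (ind w x) = ind w x" by (simp add: ind_def indicator_def)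

definition mw :: "nat list \<Rightarrow> real" where "mw w = measure M (cyl w)"

lemma mw_nonneg: "0 \<le> mw w" by (simp add: mw_def)
lemma mw_le: "w \<in> words n \<Longrightarrow> mw w \<le> a ^ n"
  using measure_cyl_le[of w] by (simp add: mw_def words_def)

lemma int_indicator_cyl: "(\<integral>x. indicator (cyl w) x \<partial>M) = mw w"
proof -
  have "cyl w \<inter> space M = cyl w" using cyl_sub space_M by auto
  then show ?thesis by (simp add: mw_def)
qed

lemma ind_int: "integrable M (\<lambda>x. indicator (cyl w) x :: real)"
proof (rule integrable_const_bound[where B=1])
  show "AE x in M. norm (indicator (cyl w) x :: real) \<le> 1" by (rule AE_I2) (simp add: indicator_def)
  show "(\<lambda>x. indicator (cyl w) x :: real) \<in> borel_measurable M" by (rule borel_measurable_indicator[OF cyl_sets])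
qed

lemma N_ind: "N (ind w) = sqrt (mw w)"
proof -
  have "(\<lambda>x. (cmod (ind w x))\<^sup>2) = (\<lambda>x. indicator (cyl w) x)"
    by (rule ext) (simp add: ind_def indicator_def)
  then show ?thesis unfolding l2norm_def using int_indicator_cyl by simp
qed

definition coef :: "(real \<Rightarrow> complex) \<Rightarrow> nat list \<Rightarrow> complex" where
  "coef f w = ip M (ind w) f"

definition lev :: "nat \<Rightarrow> (nat list \<Rightarrow> complex) \<Rightarrow> real \<Rightarrow> complex" where
  "lev n c x = (\<Sum>w\<in>words n. c w * ind w x)"

definition Lv :: "nat \<Rightarrow> (nat list \<Rightarrow> complex) \<Rightarrow> real" where
  "Lv n c = sqrt (\<Sum>w\<in>words n. (cmod (c w))\<^sup>2 * mw w)"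

lemma Lv_nonneg: "0 \<le> Lv n c"
  unfolding Lv_def by (intro real_sqrt_ge_zero sum_nonneg mult_nonneg_nonneg mw_nonneg) auto

lemma lev_meas[measurable]: "lev n c \<in> borel_measurable M"
  unfolding lev_def by measurable

lemma lev_bound: assumes D: "0 \<le> D" and c: "\<forall>w\<in>words n. cmod (c w) \<le> D"
  shows "cmod (lev n c x) \<le> D"
proof (cases "\<exists>w0\<in>words n. x \<in> cyl w0")
  case True
  then obtain w0 where "w0 \<in> words n" "x \<in> cyl w0" by blast
  then show ?thesis unfolding lev_def using collapse_ind[of x w0 n c] c by simp
next
  case False
  then show ?thesis unfolding lev_def using collapse0_ind[of n x c] D by simp
qed

lemma lev_L2: "lev n c \<in> L2 M"
proof -
  have "\<forall>w\<in>words n. cmod (c w) \<le> (\<Sum>w\<in>words n. cmod (c w))"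
    using finite_words by (auto intro: member_le_sum)
  then show ?thesis
    by (intro L2_bounded[where B="\<Sum>w\<in>words n. cmod (c w)"] lev_meas lev_bound)
       (auto intro: sum_nonneg)
qed

lemma lev_sq: "(cmod (lev n c x))\<^sup>2 = (\<Sum>w\<in>words n. (cmod (c w))\<^sup>2 * indicator (cyl w) x)"
proof (cases "\<exists>w0\<in>words n. x \<in> cyl w0")
  case True
  then obtain w0 where "w0 \<in> words n" "x \<in> cyl w0" by blast
  then show ?thesis unfolding lev_def
    using collapse_ind[of x w0 n c] collapse[of x w0 n "\<lambda>w. (cmod (c w))\<^sup>2"] by simp
next
  case False
  then show ?thesis unfolding lev_def
    using collapse0_ind[of n x c] collapse0[of n x "\<lambda>w. (cmod (c w))\<^sup>2"] by simp
qed

lemma N_lev: "N (lev n c) = Lv n c"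
proof -
  have "(N (lev n c))\<^sup>2 = (\<integral>x. (\<Sum>w\<in>words n. (cmod (c w))\<^sup>2 * indicator (cyl w) x) \<partial>M)"
    unfolding N_sq' lev_sq ..
  also have "\<dots> = (\<Sum>w\<in>words n. (\<integral>x. (cmod (c w))\<^sup>2 * indicator (cyl w) x \<partial>M))"
    by (rule Bochner_Integration.integral_sum) (rule integrable_mult_right[OF ind_int])
  also have "\<dots> = (\<Sum>w\<in>words n. (cmod (c w))\<^sup>2 * mw w)"
    using int_indicator_cyl by simp
  finally show ?thesis unfolding Lv_def using N_nonneg
    by (metis real_sqrt_unique)
qed

lemma lev_lin: "lev n (\<lambda>w. s * c w + d w) x = s * lev n c x + lev n d x"
  unfolding lev_def by (simp add: sum.distrib sum_distrib_left algebra_simps)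

lemma lev_diff: "lev n (\<lambda>w. c w - d w) x = lev n c x - lev n d x"
  unfolding lev_def by (simp add: sum_subtractf algebra_simps)

lemma coef_lin: "f \<in> L2 M \<Longrightarrow> g \<in> L2 M \<Longrightarrow> coef (\<lambda>y. s * f y + g y) w = s * coef f w + coef g w"
  unfolding coef_def using ip_add[OF ind_L2 L2_scale] ip_scale by simp

lemma coef_bound: "f \<in> L2 M \<Longrightarrow> cmod (coef f w) \<le> sqrt (mw w) * N f"
  unfolding coef_def using CS[OF ind_L2, of f w] N_ind by simp

lemma coef_bound2: assumes f: "f \<in> L2 M" and w: "w \<in> words n"
  shows "cmod (coef f w) \<le> N f * sqrt a ^ n"
proof -
  have "sqrt (mw w) \<le> sqrt (a ^ n)" by (rule real_sqrt_le_mono[OF mw_le[OF w]])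
  then have "sqrt (mw w) \<le> sqrt a ^ n" by (simp add: real_sqrt_power)
  then have "sqrt (mw w) * N f \<le> sqrt a ^ n * N f" by (rule mult_right_mono) (rule N_nonneg)
  then show ?thesis using coef_bound[OF f, of w] by (simp add: mult.commute)
qed

lemma L2_mult_bounded: assumes f: "f \<in> L2 M" and h[measurable]: "h \<in> borel_measurable M"
  and b: "\<And>x. cmod (h x) \<le> 1"
  shows "(\<lambda>x. h x * f x) \<in> L2 M"
proof -
  have [measurable]: "f \<in> borel_measurable M" using f by (simp add: L2_def)
  have i: "integrable M (\<lambda>x. (cmod (f x))\<^sup>2)" using f by (simp add: L2_def)
  have "integrable M (\<lambda>x. (cmod (h x * f x))\<^sup>2)"
  proof (rule Bochner_Integration.integrable_bound[OF i])
    show "(\<lambda>x. (cmod (h x * f x))\<^sup>2) \<in> borel_measurable M" by measurable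
    show "AE x in M. norm ((cmod (h x * f x))\<^sup>2) \<le> norm ((cmod (f x))\<^sup>2)"
    proof (rule AE_I2)
      fix x
      have "cmod (h x * f x) \<le> cmod (f x)" using b[of x] by (simp add: norm_mult mult_left_le_one_le)
      then show "norm ((cmod (h x * f x))\<^sup>2) \<le> norm ((cmod (f x))\<^sup>2)" by (simp add: power_mono)
    qed
  qed
  then show ?thesis by (simp add: L2_def)
qed

lemma coef_sq: assumes f: "f \<in> L2 M"
  shows "(cmod (coef f w))\<^sup>2 \<le> mw w * (\<integral>x. indicator (cyl w) x * (cmod (f x))\<^sup>2 \<partial>M)"
proof -
  have f2: "(\<lambda>x. ind w x * f x) \<in> L2 M"
    by (rule L2_mult_bounded[OF f ind_meas]) (simp add: ind_def indicator_def)
  have "coef f w = ip M (ind w) (\<lambda>x. ind w x * f x)"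
    unfolding coef_def ip_def by (simp add: cnj_ind mult.assoc[symmetric] ind_sq)
  then have "cmod (coef f w) \<le> sqrt (mw w) * N (\<lambda>x. ind w x * f x)"
    using CS[OF ind_L2 f2, of w] N_ind by simp
  then have "(cmod (coef f w))\<^sup>2 \<le> (sqrt (mw w) * N (\<lambda>x. ind w x * f x))\<^sup>2"
    by (rule power_mono) simp
  also have "\<dots> = mw w * (N (\<lambda>x. ind w x * f x))\<^sup>2"
    by (simp add: power_mult_distrib mw_nonneg)
  also have "(N (\<lambda>x. ind w x * f x))\<^sup>2 = (\<integral>x. indicator (cyl w) x * (cmod (f x))\<^sup>2 \<partial>M)"
  proof -
    have "(\<lambda>x. (cmod (ind w x * f x))\<^sup>2) = (\<lambda>x. indicator (cyl w) x * (cmod (f x))\<^sup>2)"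
      by (rule ext) (simp add: ind_def indicator_def norm_mult)
    then show ?thesis unfolding N_sq' by simp
  qed
  finally show ?thesis .
qed

lemma Lv_coef: assumes f: "f \<in> L2 M" shows "Lv n (coef f) \<le> a ^ n * N f"
proof -
  have [measurable]: "f \<in> borel_measurable M" using f by (simp add: L2_def)
  have i: "integrable M (\<lambda>x. (cmod (f x))\<^sup>2)" using f by (simp add: L2_def)
  have ii: "integrable M (\<lambda>x. indicator (cyl w) x * (cmod (f x))\<^sup>2)" for w
    by (rule Bochner_Integration.integrable_bound[OF i]) (auto intro!: AE_I2 simp: indicator_def)
  have "(\<Sum>w\<in>words n. (cmod (coef f w))\<^sup>2 * mw w)
      \<le> (\<Sum>w\<in>words n. (a ^ n)\<^sup>2 * (\<integral>x. indicator (cyl w) x * (cmod (f x))\<^sup>2 \<partial>M))"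
  proof (rule sum_mono)
    fix w assume w: "w \<in> words n"
    have I0: "0 \<le> (\<integral>x. indicator (cyl w) x * (cmod (f x))\<^sup>2 \<partial>M)"
      by (rule integral_nonneg_AE) (auto simp: indicator_def)
    have "(cmod (coef f w))\<^sup>2 * mw w \<le> (mw w * (\<integral>x. indicator (cyl w) x * (cmod (f x))\<^sup>2 \<partial>M)) * mw w"
      by (rule mult_right_mono[OF coef_sq[OF f] mw_nonneg])
    also have "\<dots> = (mw w)\<^sup>2 * (\<integral>x. indicator (cyl w) x * (cmod (f x))\<^sup>2 \<partial>M)"
      by (simp add: power2_eq_square)
    also have "\<dots> \<le> (a ^ n)\<^sup>2 * (\<integral>x. indicator (cyl w) x * (cmod (f x))\<^sup>2 \<partial>M)"
      by (rule mult_right_mono[OF power_mono[OF mw_le[OF w] mw_nonneg] I0])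
    finally show "(cmod (coef f w))\<^sup>2 * mw w \<le> (a ^ n)\<^sup>2 * (\<integral>x. indicator (cyl w) x * (cmod (f x))\<^sup>2 \<partial>M)" .
  qed
  also have "\<dots> = (a ^ n)\<^sup>2 * (\<integral>x. (\<Sum>w\<in>words n. indicator (cyl w) x * (cmod (f x))\<^sup>2) \<partial>M)"
    by (simp add: sum_distrib_left Bochner_Integration.integral_sum[OF ii])
  also have "\<dots> \<le> (a ^ n)\<^sup>2 * (\<integral>x. (cmod (f x))\<^sup>2 \<partial>M)"
  proof (rule mult_left_mono)
    show "(\<integral>x. (\<Sum>w\<in>words n. indicator (cyl w) x * (cmod (f x))\<^sup>2) \<partial>M) \<le> (\<integral>x. (cmod (f x))\<^sup>2 \<partial>M)"
    proof (rule integral_mono[OF _ i])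
      show "integrable M (\<lambda>x. \<Sum>w\<in>words n. indicator (cyl w) x * (cmod (f x))\<^sup>2)"
        by (rule Bochner_Integration.integrable_sum) (rule ii)
      fix x
      show "(\<Sum>w\<in>words n. indicator (cyl w) x * (cmod (f x))\<^sup>2) \<le> (cmod (f x))\<^sup>2"
      proof (cases "\<exists>w0\<in>words n. x \<in> cyl w0")
        case True
        then obtain w0 where "w0 \<in> words n" "x \<in> cyl w0" by blast
        then show ?thesis using collapse[of x w0 n "\<lambda>w. (cmod (f x))\<^sup>2"] by (simp add: mult.commute)
      next
        case False
        then show ?thesis using collapse0[of n x "\<lambda>w. (cmod (f x))\<^sup>2"] by (simp add: mult.commute)
      qed
    qed
  qed simp
  also have "\<dots> = (a ^ n * N f)\<^sup>2" by (simp add: power_mult_distrib N_sq')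
  finally have "(\<Sum>w\<in>words n. (cmod (coef f w))\<^sup>2 * mw w) \<le> (a ^ n * N f)\<^sup>2" .
  then have "Lv n (coef f) \<le> sqrt ((a ^ n * N f)\<^sup>2)" unfolding Lv_def by (rule real_sqrt_le_mono)
  also have "\<dots> = a ^ n * N f" using a_pos N_nonneg by simp
  finally show ?thesis .
qed

lemma Kop_eq: "Kop M m f x = (\<Sum>n\<le>m. lev n (coef f) x)"
proof -
  have wl: "words_le m = (\<Union>n\<in>{..m}. words n)" by (auto simp: words_le_def words_def)
  have "Kop M m f x = (\<Sum>u\<in>(\<Union>n\<in>{..m}. words n). coef f u * ind u x)"
    unfolding Kop_def coef_def wl ..
  also have "\<dots> = (\<Sum>n\<le>m. (\<Sum>u\<in>words n. coef f u * ind u x))"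
  proof (rule sum.UNION_disjoint)
    show "\<forall>i\<in>{..m}. finite (words i)" using finite_words by blast
    show "\<forall>i\<in>{..m}. \<forall>j\<in>{..m}. i \<noteq> j \<longrightarrow> words i \<inter> words j = {}"
      by (auto simp: words_def)
  qed simp
  finally show ?thesis unfolding lev_def .
qed

lemma DE_eq: assumes f: "f \<in> L2 M" shows "DE_partial M m f = Kop M m f"
proof (rule ext)
  fix x
  have "Dop M n (Eop M n f) x = lev n (coef f) x" for n
  proof (cases "\<exists>w0\<in>words n. x \<in> cyl w0")
    case True
    then obtain w0 where w0: "w0 \<in> words n" "x \<in> cyl w0" by blast
    have e1: "(\<Sum>w\<in>words n. complex_of_real (measure M (cyl w)) * ind w x) = complex_of_real (measure M (cyl w0))"
      by (rule collapse_ind[OF w0(2) w0(1)])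
    have e2: "(\<Sum>w\<in>words n. (ip M (ind w) f / complex_of_real (measure M (cyl w))) * ind w x)
        = ip M (ind w0) f / complex_of_real (measure M (cyl w0))"
      by (rule collapse_ind[OF w0(2) w0(1)])
    have "Dop M n (Eop M n f) x = complex_of_real (mw w0) * (coef f w0 / complex_of_real (mw w0))"
      by (simp only: Dop_def Eop_def e1 e2 mw_def coef_def)
    also have "\<dots> = coef f w0"
    proof (cases "mw w0 = 0")
      case True
      then have "cmod (coef f w0) \<le> 0" using coef_bound[OF f, of w0] by simp
      then show ?thesis using True by simp
    qed simp
    also have "\<dots> = lev n (coef f) x" unfolding lev_def using collapse_ind[OF w0(2) w0(1)] by simp
    finally show ?thesis .
  next
    case False
    then show ?thesis unfolding Dop_def Eop_def lev_def using collapse0_ind[of n x] by simp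
  qed
  then show "DE_partial M m f x = Kop M m f x" unfolding DE_partial_def Kop_eq by simp
qed

end

context mup
begin

abbreviation "r \<equiv> sqrt a"

lemma r_pos: "0 < r" and r_lt1: "r < 1"
  using a_pos a_lt1 by auto

lemma summable_r: "summable (\<lambda>n. D * r ^ n)"
  using r_pos r_lt1 by (intro summable_mult summable_geometric) simp

lemma suminf_r: "(\<Sum>n. D * r ^ n) = D / (1 - r)"
  using r_pos r_lt1 suminf_mult[OF summable_geometric[of r], of D] suminf_geometric[of r] by simp

definition good :: "real \<Rightarrow> (nat list \<Rightarrow> complex) \<Rightarrow> bool" where
  "good D c \<longleftrightarrow> 0 \<le> D \<and> (\<forall>n. \<forall>w\<in>words n. cmod (c w) \<le> D * r ^ n)"

definition Tl :: "nat \<Rightarrow> (nat list \<Rightarrow> complex) \<Rightarrow> real \<Rightarrow> complex" where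
  "Tl k c x = (\<Sum>n. lev (n + k) c x)"

definition Syn :: "(nat list \<Rightarrow> complex) \<Rightarrow> real \<Rightarrow> complex" where
  "Syn c x = (\<Sum>n. lev n c x)"

lemma lev_good: assumes "good D c" shows "cmod (lev n c x) \<le> D * r ^ n"
  using assms r_pos unfolding good_def by (intro lev_bound) auto

lemma lev_good_k: assumes "good D c" shows "cmod (lev (n + k) c x) \<le> D * r ^ n"
proof -
  have "r ^ (n + k) \<le> r ^ n" using r_pos r_lt1 by (intro power_decreasing) auto
  then have "D * r ^ (n + k) \<le> D * r ^ n" using assms by (intro mult_left_mono) (auto simp: good_def)
  then show ?thesis using lev_good[OF assms, of "n + k" x] by linarith
qed

lemma summable_lev: assumes "good D c" shows "summable (\<lambda>n. lev (n + k) c x)"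
  by (rule summable_comparison_test'[OF summable_r lev_good_k[OF assms]])

lemma summable_lev_norm: assumes "good D c" shows "summable (\<lambda>n. cmod (lev (n + k) c x))"
  by (rule summable_comparison_test'[OF summable_r[of D]]) (simp add: lev_good_k[OF assms])

lemma partial_bound: assumes g: "good D c"
  shows "cmod (\<Sum>n<j. lev (n + k) c x) \<le> D / (1 - r)"
proof -
  have "cmod (\<Sum>n<j. lev (n + k) c x) \<le> (\<Sum>n<j. cmod (lev (n + k) c x))" by (rule norm_sum)
  also have "\<dots> \<le> (\<Sum>n<j. D * r ^ n)" by (intro sum_mono lev_good_k[OF g])
  also have "\<dots> \<le> (\<Sum>n. D * r ^ n)"
    using g r_pos by (intro sum_le_suminf summable_r) (auto simp: good_def)
  finally show ?thesis using suminf_r by simp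
qed

lemma Tl_bound: assumes g: "good D c" shows "cmod (Tl k c x) \<le> D / (1 - r)"
proof -
  have "cmod (Tl k c x) \<le> (\<Sum>n. cmod (lev (n + k) c x))"
    unfolding Tl_def by (rule summable_norm[OF summable_lev_norm[OF g]])
  also have "\<dots> \<le> (\<Sum>n. D * r ^ n)"
    by (intro suminf_le lev_good_k[OF g] summable_lev_norm[OF g] summable_r)
  finally show ?thesis using suminf_r by simp
qed

lemma Tl_lim: assumes g: "good D c" shows "(\<lambda>j. \<Sum>n<j. lev (n + k) c x) \<longlonglongrightarrow> Tl k c x"
  unfolding Tl_def by (rule summable_LIMSEQ[OF summable_lev[OF g]])

lemma Tl_meas: assumes g: "good D c" shows "Tl k c \<in> borel_measurable M"
proof (rule borel_measurable_LIMSEQ_metric)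
  show "(\<lambda>x. \<Sum>n<j. lev (n + k) c x) \<in> borel_measurable M" for j by measurable
  show "(\<lambda>j. \<Sum>n<j. lev (n + k) c x) \<longlonglongrightarrow> Tl k c x" for x by (rule Tl_lim[OF g])
qed

lemma Tl_L2: assumes g: "good D c" shows "Tl k c \<in> L2 M"
  by (rule L2_bounded[OF Tl_meas[OF g] Tl_bound[OF g]])

lemma N_Tl: assumes g: "good D c" and sL: "summable (\<lambda>n. Lv (n + k) c)"
  shows "N (Tl k c) \<le> (\<Sum>n. Lv (n + k) c)"
proof -
  define S where "S = (\<Sum>n. Lv (n + k) c)"
  have S0: "0 \<le> S" unfolding S_def by (intro suminf_nonneg sL Lv_nonneg)
  define s where "s j x = (\<Sum>n<j. lev (n + k) c x)" for j x
  have sm[measurable]: "s j \<in> borel_measurable M" for j unfolding s_def by measurable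
  have sL2: "s j \<in> L2 M" for j unfolding s_def by (intro L2_sum lev_L2)
  have Ns: "(\<integral>x. (cmod (s j x))\<^sup>2 \<partial>M) \<le> S\<^sup>2" for j
  proof -
    have "N (s j) \<le> (\<Sum>n<j. N (lev (n + k) c))" unfolding s_def by (intro N_sum lev_L2)
    also have "\<dots> = (\<Sum>n<j. Lv (n + k) c)" by (simp add: N_lev)
    also have "\<dots> \<le> S" unfolding S_def by (intro sum_le_suminf sL) (auto simp: Lv_nonneg)
    finally have "(N (s j))\<^sup>2 \<le> S\<^sup>2" by (intro power_mono) (auto simp: N_nonneg)
    then show ?thesis by (simp add: N_sq')
  qed
  have [measurable]: "Tl k c \<in> borel_measurable M" by (rule Tl_meas[OF g])
  have lim: "(\<lambda>j. \<integral>x. (cmod (s j x))\<^sup>2 \<partial>M) \<longlonglongrightarrow> (\<integral>x. (cmod (Tl k c x))\<^sup>2 \<partial>M)"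
  proof (rule integral_dominated_convergence[where w="\<lambda>x. (D / (1 - r))\<^sup>2"])
    show "(\<lambda>x. (cmod (Tl k c x))\<^sup>2) \<in> borel_measurable M" by measurable
    show "(\<lambda>x. (cmod (s j x))\<^sup>2) \<in> borel_measurable M" for j by measurable
    show "integrable M (\<lambda>x. (D / (1 - r))\<^sup>2)" by simp
    show "AE x in M. (\<lambda>j. (cmod (s j x))\<^sup>2) \<longlonglongrightarrow> (cmod (Tl k c x))\<^sup>2"
      unfolding s_def by (intro AE_I2 tendsto_intros Tl_lim[OF g])
    show "AE x in M. norm ((cmod (s j x))\<^sup>2) \<le> (D / (1 - r))\<^sup>2" for j
      unfolding s_def by (intro AE_I2) (simp add: power_mono partial_bound[OF g])
  qed
  have "(\<integral>x. (cmod (Tl k c x))\<^sup>2 \<partial>M) \<le> S\<^sup>2"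
    by (rule LIMSEQ_le_const2[OF lim]) (simp add: Ns)
  then have "(N (Tl k c))\<^sup>2 \<le> S\<^sup>2" by (simp add: N_sq')
  then have "N (Tl k c) \<le> S" by (rule power2_le_imp_le[OF _ S0])
  then show ?thesis by (simp add: S_def)
qed

lemma Syn_Tl: "Syn c = Tl 0 c"
  by (rule ext) (simp add: Syn_def Tl_def)

lemma Tl_split: assumes g: "good D c"
  shows "Syn c x - (\<Sum>n\<le>m. lev n c x) = Tl (Suc m) c x"
  using suminf_split_initial_segment[OF summable_lev[OF g, of 0 x], of "Suc m"]
  unfolding Syn_def Tl_def by (simp add: lessThan_Suc_atMost)

lemma good_lin: assumes "good D c" "good D' d"
  shows "good (cmod s * D + D') (\<lambda>w. s * c w + d w)"
  unfolding good_def
proof (intro conjI allI ballI)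
  show "0 \<le> cmod s * D + D'" using assms by (auto simp: good_def)
  fix n w assume w: "w \<in> words n"
  have "cmod (s * c w + d w) \<le> cmod s * cmod (c w) + cmod (d w)"
    by (metis norm_mult norm_triangle_ineq)
  also have "\<dots> \<le> cmod s * (D * r ^ n) + D' * r ^ n"
    using assms w by (intro add_mono mult_left_mono) (auto simp: good_def)
  finally show "cmod (s * c w + d w) \<le> (cmod s * D + D') * r ^ n" by (simp add: algebra_simps)
qed

lemma good_diff: assumes "good D c" "good D' d"
  shows "good (D + D') (\<lambda>w. c w - d w)"
  using good_lin[OF assms(2) assms(1), of "-1"] by (simp add: add.commute)

lemma Syn_lin: assumes g: "good D c" "good D' d"
  shows "Syn (\<lambda>w. s * c w + d w) x = s * Syn c x + Syn d x"
proof -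
  have "Syn (\<lambda>w. s * c w + d w) x = (\<Sum>n. s * lev n c x + lev n d x)"
    unfolding Syn_def lev_lin ..
  also have "\<dots> = (\<Sum>n. s * lev n c x) + (\<Sum>n. lev n d x)"
    using summable_lev[OF g(1), of 0 x] summable_lev[OF g(2), of 0 x]
    by (intro suminf_add[symmetric] summable_mult) auto
  also have "\<dots> = s * Syn c x + Syn d x"
    unfolding Syn_def using summable_lev[OF g(1), of 0 x] by (simp add: suminf_mult)
  finally show ?thesis .
qed

lemma Syn_diff: assumes g: "good D c" "good D' d"
  shows "Syn (\<lambda>w. c w - d w) x = Syn c x - Syn d x"
  using Syn_lin[OF g(2) g(1), of "-1" x] by simp

lemma good_coef: "f \<in> L2 M \<Longrightarrow> good (N f) (coef f)"
  unfolding good_def using coef_bound2 N_nonneg by auto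

lemma summable_a: "summable (\<lambda>n. C * a ^ n)"
  using a_pos a_lt1 by (intro summable_mult summable_geometric) simp

lemma summable_Lv_coef: assumes f: "f \<in> L2 M" shows "summable (\<lambda>n. Lv (n + k) (coef f))"
proof -
  have b: "norm (Lv n (coef f)) \<le> N f * a ^ n" for n
    using Lv_coef[OF f, of n] Lv_nonneg[of n "coef f"] by (simp add: mult.commute)
  have "summable (\<lambda>n. Lv n (coef f))"
    by (rule summable_comparison_test'[OF summable_a[of "N f"] b])
  then show ?thesis by (rule summable_ignore_initial_segment)
qed

lemma N_Tl_coef: assumes f: "f \<in> L2 M"
  shows "N (Tl k (coef f)) \<le> (\<Sum>n. a ^ (n + k)) * N f"
proof -
  have "N (Tl k (coef f)) \<le> (\<Sum>n. Lv (n + k) (coef f))"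
    by (rule N_Tl[OF good_coef[OF f] summable_Lv_coef[OF f]])
  also have "\<dots> \<le> (\<Sum>n. a ^ (n + k) * N f)"
  proof (rule suminf_le)
    show "summable (\<lambda>n. a ^ (n + k) * N f)"
      using summable_ignore_initial_segment[OF summable_a[of "N f"], of k] by (simp add: mult.commute)
  qed (auto simp: Lv_coef[OF f] summable_Lv_coef[OF f])
  also have "\<dots> = (\<Sum>n. a ^ (n + k)) * N f"
    using summable_ignore_initial_segment[OF summable_a[of 1], of k] by (simp add: suminf_mult2)
  finally show ?thesis .
qed

end

context mup
begin

definition lin_op :: "op \<Rightarrow> bool" where
  "lin_op T \<longleftrightarrow> (\<forall>f\<in>L2 M. T f \<in> L2 M) \<and>
     (\<forall>f\<in>L2 M. \<forall>g\<in>L2 M. \<forall>c. T (\<lambda>y. c * f y + g y) = (\<lambda>x. c * T f x + T g x)) \<and>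
     (\<exists>B. \<forall>f\<in>L2 M. N (T f) \<le> B * N f)"

lemma lin_L2: "lin_op T \<Longrightarrow> f \<in> L2 M \<Longrightarrow> T f \<in> L2 M" by (simp add: lin_op_def)

lemma lin_lin: "lin_op T \<Longrightarrow> f \<in> L2 M \<Longrightarrow> g \<in> L2 M \<Longrightarrow> T (\<lambda>y. c * f y + g y) = (\<lambda>x. c * T f x + T g x)"
  by (simp add: lin_op_def)

lemma lin_bound: assumes "lin_op T" obtains B where "0 \<le> B" "\<And>f. f \<in> L2 M \<Longrightarrow> N (T f) \<le> B * N f"
proof -
  obtain B where B: "\<And>f. f \<in> L2 M \<Longrightarrow> N (T f) \<le> B * N f" using assms unfolding lin_op_def by blast
  have "N (T f) \<le> max B 0 * N f" if "f \<in> L2 M" for f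
    using B[OF that] N_nonneg[of f] by (smt (verit) mult_right_mono)
  then show ?thesis using that[of "max B 0"] by auto
qed

lemma lin_zero: assumes "lin_op T" shows "T (\<lambda>y. 0) = (\<lambda>x. 0)"
  using lin_lin[OF assms L2_zero L2_zero, of "-1"] by simp

lemma lin_scale: assumes "lin_op T" "f \<in> L2 M" shows "T (\<lambda>y. c * f y) = (\<lambda>x. c * T f x)"
  using lin_lin[OF assms L2_zero, of c] lin_zero[OF assms(1)] by simp

lemma lin_add: assumes "lin_op T" "f \<in> L2 M" "g \<in> L2 M" shows "T (\<lambda>y. f y + g y) = (\<lambda>x. T f x + T g x)"
  using lin_lin[OF assms, of 1] by simp

lemma lin_diff: assumes "lin_op T" "f \<in> L2 M" "g \<in> L2 M" shows "T (\<lambda>y. f y - g y) = (\<lambda>x. T f x - T g x)"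
  using lin_lin[OF assms(1) assms(3) assms(2), of "-1"] by simp

lemma opnorm_le: assumes "\<And>f. f \<in> L2 M \<Longrightarrow> N f \<le> 1 \<Longrightarrow> N (T f) \<le> C"
  shows "opnorm M T \<le> C"
  unfolding opnorm_def
proof (rule cSup_least)
  show "{N (T f) |f. f \<in> L2 M \<and> N f \<le> 1} \<noteq> {}" using L2_zero by fastforce
  show "\<And>x. x \<in> {N (T f) |f. f \<in> L2 M \<and> N f \<le> 1} \<Longrightarrow> x \<le> C" using assms by blast
qed

lemma opnorm_ge: assumes "\<And>f. f \<in> L2 M \<Longrightarrow> N f \<le> 1 \<Longrightarrow> N (T f) \<le> C"
  and "f \<in> L2 M" "N f \<le> 1"
  shows "N (T f) \<le> opnorm M T"
  unfolding opnorm_def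
proof (rule cSup_upper)
  show "N (T f) \<in> {N (T f) |f. f \<in> L2 M \<and> N f \<le> 1}" using assms by blast
  show "bdd_above {N (T f) |f. f \<in> L2 M \<and> N f \<le> 1}" using assms(1) by (auto intro!: bdd_aboveI)
qed

lemma opnorm_nonneg: assumes "\<And>f. f \<in> L2 M \<Longrightarrow> N f \<le> 1 \<Longrightarrow> N (T f) \<le> C"
  shows "0 \<le> opnorm M T"
  using opnorm_ge[where T=T and C=C and f="\<lambda>x. 0", OF assms L2_zero] N_nonneg[of "T (\<lambda>x. 0)"] by simp

lemma lin_unit: assumes "lin_op T" obtains B where "\<And>f. f \<in> L2 M \<Longrightarrow> N f \<le> 1 \<Longrightarrow> N (T f) \<le> B"
proof -
  obtain B where B: "0 \<le> B" "\<And>f. f \<in> L2 M \<Longrightarrow> N (T f) \<le> B * N f" using lin_bound[OF assms] by blast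
  have "N (T f) \<le> B" if "f \<in> L2 M" "N f \<le> 1" for f
    using B(2)[OF that(1)] mult_left_mono[OF that(2) B(1)] by simp
  then show ?thesis using that by blast
qed

lemma lin_opnorm: assumes T: "lin_op T" and f: "f \<in> L2 M"
  shows "N (T f) \<le> opnorm M T * N f"
proof -
  obtain B where B: "0 \<le> B" "\<And>f. f \<in> L2 M \<Longrightarrow> N (T f) \<le> B * N f" using lin_bound[OF T] by blast
  obtain C where C: "\<And>f. f \<in> L2 M \<Longrightarrow> N f \<le> 1 \<Longrightarrow> N (T f) \<le> C" using lin_unit[OF T] by blast
  show ?thesis
  proof (cases "N f = 0")
    case True
    then show ?thesis using B(2)[OF f] N_nonneg[of "T f"] by simp
  next
    case False
    then have nf: "N f > 0" using N_nonneg[of f] by simp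
    define u where "u = (\<lambda>y. complex_of_real (1 / N f) * f y)"
    have u: "u \<in> L2 M" unfolding u_def by (rule L2_scale[OF f])
    have Nu: "N u = 1" unfolding u_def N_scale using nf by (simp add: norm_divide)
    have "T u = (\<lambda>x. complex_of_real (1 / N f) * T f x)" unfolding u_def by (rule lin_scale[OF T f])
    then have "N (T u) = cmod (complex_of_real (1 / N f)) * N (T f)" by (simp only: N_scale)
    then have e: "N (T u) = N (T f) / N f" using nf by (simp add: norm_divide)
    have Nu1: "N u \<le> 1" using Nu by linarith
    have "N (T u) \<le> opnorm M T" by (rule opnorm_ge[OF C u Nu1])
    then show ?thesis using nf e by (simp add: divide_le_eq)
  qed
qed

lemma lin_op_diff: assumes T: "lin_op T" and U: "lin_op U" shows "lin_op (op_diff T U)"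
  unfolding lin_op_def
proof (intro conjI ballI allI)
  fix f assume f: "f \<in> L2 M"
  show "op_diff T U f \<in> L2 M" unfolding op_diff_def by (intro L2_diff lin_L2[OF T f] lin_L2[OF U f])
next
  fix f g c assume f: "f \<in> L2 M" and g: "g \<in> L2 M"
  show "op_diff T U (\<lambda>y. c * f y + g y) = (\<lambda>x. c * op_diff T U f x + op_diff T U g x)"
    unfolding op_diff_def lin_lin[OF T f g] lin_lin[OF U f g] by (simp add: algebra_simps)
next
  obtain B1 where B1: "0 \<le> B1" "\<And>f. f \<in> L2 M \<Longrightarrow> N (T f) \<le> B1 * N f" using lin_bound[OF T] by blast
  obtain B2 where B2: "0 \<le> B2" "\<And>f. f \<in> L2 M \<Longrightarrow> N (U f) \<le> B2 * N f" using lin_bound[OF U] by blast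
  have "N (op_diff T U f) \<le> (B1 + B2) * N f" if f: "f \<in> L2 M" for f
  proof -
    have "N (op_diff T U f) \<le> N (T f) + N (U f)" unfolding op_diff_def
      by (rule N_diff[OF lin_L2[OF T f] lin_L2[OF U f]])
    also have "\<dots> \<le> (B1 + B2) * N f" using B1(2)[OF f] B2(2)[OF f] by (simp add: algebra_simps)
    finally show ?thesis .
  qed
  then show "\<exists>B. \<forall>f\<in>L2 M. N (op_diff T U f) \<le> B * N f" by blast
qed

lemma lin_bounded_lin_op: "lin_op T \<Longrightarrow> bounded_lin_op M T"
  unfolding bounded_lin_op_def lin_op_def by simp

definition Kinf :: op where "Kinf f = Syn (coef f)"

lemma Kop_fun: "Kop M m f = (\<lambda>x. \<Sum>n\<le>m. lev n (coef f) x)"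
  by (rule ext) (rule Kop_eq)

lemma Kop_lin_op: "lin_op (Kop M m)"
  unfolding lin_op_def
proof (intro conjI ballI allI)
  fix f assume f: "f \<in> L2 M"
  show "Kop M m f \<in> L2 M" unfolding Kop_fun by (intro L2_sum lev_L2)
next
  fix f g c assume f: "f \<in> L2 M" and g: "g \<in> L2 M"
  show "Kop M m (\<lambda>y. c * f y + g y) = (\<lambda>x. c * Kop M m f x + Kop M m g x)"
    unfolding Kop_fun coef_lin[OF f g, abs_def] lev_lin by (simp add: sum.distrib sum_distrib_left)
next
  have "N (Kop M m f) \<le> (\<Sum>n\<le>m. a ^ n) * N f" if f: "f \<in> L2 M" for f
  proof -
    have "N (Kop M m f) \<le> (\<Sum>n\<le>m. N (lev n (coef f)))" unfolding Kop_fun by (intro N_sum lev_L2)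
    also have "\<dots> \<le> (\<Sum>n\<le>m. a ^ n * N f)" unfolding N_lev by (intro sum_mono Lv_coef[OF f])
    finally show ?thesis by (simp add: sum_distrib_right)
  qed
  then show "\<exists>B. \<forall>f\<in>L2 M. N (Kop M m f) \<le> B * N f" by blast
qed

lemma Kinf_lin_op: "lin_op Kinf"
  unfolding lin_op_def
proof (intro conjI ballI allI)
  fix f assume f: "f \<in> L2 M"
  show "Kinf f \<in> L2 M" unfolding Kinf_def Syn_Tl by (rule Tl_L2[OF good_coef[OF f]])
next
  fix f g c assume f: "f \<in> L2 M" and g: "g \<in> L2 M"
  show "Kinf (\<lambda>y. c * f y + g y) = (\<lambda>x. c * Kinf f x + Kinf g x)"
    unfolding Kinf_def coef_lin[OF f g, abs_def]
    by (rule ext) (rule Syn_lin[OF good_coef[OF f] good_coef[OF g]])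
next
  have "N (Kinf f) \<le> (\<Sum>n. a ^ (n + 0)) * N f" if f: "f \<in> L2 M" for f
    unfolding Kinf_def Syn_Tl by (rule N_Tl_coef[OF f])
  then show "\<exists>B. \<forall>f\<in>L2 M. N (Kinf f) \<le> B * N f" by blast
qed

definition tm :: "nat \<Rightarrow> real" where "tm m = (\<Sum>n. a ^ (n + m + 1))"

lemma tm_eq: "tm m = a ^ (m + 1) / (1 - a)"
proof -
  have e: "a ^ (n + m + 1) = a ^ (m + 1) * a ^ n" for n
    by (subst power_add[symmetric]) (simp add: add_ac)
  have "tm m = (\<Sum>n. a ^ (m + 1) * a ^ n)" unfolding tm_def e ..
  also have "\<dots> = a ^ (m + 1) * (\<Sum>n. a ^ n)"
    using a_pos a_lt1 by (intro suminf_mult summable_geometric) simp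
  also have "\<dots> = a ^ (m + 1) / (1 - a)" using a_pos a_lt1 by (simp add: suminf_geometric)
  finally show ?thesis .
qed

lemma tm_nonneg: "0 \<le> tm m" unfolding tm_eq using a_pos a_lt1 by simp

lemma tm_lim: "tm \<longlonglongrightarrow> 0"
proof -
  have "(\<lambda>m. a ^ (m + 1) / (1 - a)) \<longlonglongrightarrow> 0 / (1 - a)"
    using a_pos a_lt1 by (intro tendsto_intros LIMSEQ_power_zero[THEN LIMSEQ_ignore_initial_segment[where k=1]]) auto
  then show ?thesis unfolding tm_eq[abs_def] by simp
qed

lemma Kinf_diff: assumes f: "f \<in> L2 M" shows "op_diff Kinf (Kop M m) f = Tl (Suc m) (coef f)"
  unfolding op_diff_def Kinf_def Kop_fun by (rule ext) (rule Tl_split[OF good_coef[OF f]])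

lemma N_Kinf_diff: assumes f: "f \<in> L2 M" shows "N (op_diff Kinf (Kop M m) f) \<le> tm m * N f"
  unfolding Kinf_diff[OF f] tm_def using N_Tl_coef[OF f, of "Suc m"] by simp

lemma opnorm_Kinf_diff: "opnorm M (op_diff Kinf (Kop M m)) \<le> tm m"
proof (rule opnorm_le)
  fix f assume f: "f \<in> L2 M" "N f \<le> 1"
  show "N (op_diff Kinf (Kop M m) f) \<le> tm m"
    using N_Kinf_diff[OF f(1), of m] mult_left_mono[OF f(2) tm_nonneg[of m]] by simp
qed

lemma opnorm_Kinf_diff_nonneg: "0 \<le> opnorm M (op_diff Kinf (Kop M m))"
proof (rule opnorm_nonneg)
  fix f assume f: "f \<in> L2 M" "N f \<le> 1"
  show "N (op_diff Kinf (Kop M m) f) \<le> tm m"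
    using N_Kinf_diff[OF f(1), of m] mult_left_mono[OF f(2) tm_nonneg[of m]] by simp
qed

lemma opnorm_cong: "(\<And>f. f \<in> L2 M \<Longrightarrow> N (T f) = N (U f)) \<Longrightarrow> opnorm M T = opnorm M U"
  unfolding opnorm_def by (metis (no_types, lifting))

lemma opnorm_DE: "opnorm M (op_diff K (DE_partial M m)) = opnorm M (op_diff K (Kop M m))"
  by (rule opnorm_cong) (simp add: op_diff_def DE_eq)

end

context mup
begin

lemma ip_add_l: "f \<in> L2 M \<Longrightarrow> g \<in> L2 M \<Longrightarrow> h \<in> L2 M \<Longrightarrow>
   ip M (\<lambda>x. f x + g x) h = ip M f h + ip M g h"
  unfolding ip_def by (simp add: distrib_right int_prod)

lemma ip_diff_l: "f \<in> L2 M \<Longrightarrow> g \<in> L2 M \<Longrightarrow> h \<in> L2 M \<Longrightarrow>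
   ip M (\<lambda>x. f x - g x) h = ip M f h - ip M g h"
  unfolding ip_def by (simp add: left_diff_distrib int_prod)

lemma ip_zero_r: "f \<in> L2 M \<Longrightarrow> g \<in> L2 M \<Longrightarrow> N g = 0 \<Longrightarrow> ip M f g = 0"
  using CS[of f g] by simp

lemma ip_zero_l: "f \<in> L2 M \<Longrightarrow> g \<in> L2 M \<Longrightarrow> N f = 0 \<Longrightarrow> ip M f g = 0"
  using CS[of f g] by simp

definition Mq :: "op \<Rightarrow> real" where
  "Mq T = Sup {Re (ip M f (T f)) | f. f \<in> L2 M \<and> N f \<le> 1}"

lemma Q_le_N: "f \<in> L2 M \<Longrightarrow> g \<in> L2 M \<Longrightarrow> Re (ip M f g) \<le> N f * N g"
  using CS[of f g] complex_Re_le_cmod[of "ip M f g"] by linarith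

lemma Mq_props: assumes T: "lin_op T"
  shows "bdd_above {Re (ip M f (T f)) | f. f \<in> L2 M \<and> N f \<le> 1}"
    and "{Re (ip M f (T f)) | f. f \<in> L2 M \<and> N f \<le> 1} \<noteq> {}"
proof -
  obtain B where B: "\<And>f. f \<in> L2 M \<Longrightarrow> N f \<le> 1 \<Longrightarrow> N (T f) \<le> B" using lin_unit[OF T] by blast
  have "Re (ip M f (T f)) \<le> B" if "f \<in> L2 M" "N f \<le> 1" for f
  proof -
    have "Re (ip M f (T f)) \<le> N f * N (T f)" by (rule Q_le_N[OF that(1) lin_L2[OF T that(1)]])
    also have "\<dots> \<le> 1 * N (T f)" by (rule mult_right_mono[OF that(2) N_nonneg])
    also have "\<dots> \<le> B" using B[OF that] by simp
    finally show ?thesis .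
  qed
  then show "bdd_above {Re (ip M f (T f)) | f. f \<in> L2 M \<and> N f \<le> 1}" by (auto intro!: bdd_aboveI)
  show "{Re (ip M f (T f)) | f. f \<in> L2 M \<and> N f \<le> 1} \<noteq> {}" using L2_zero by fastforce
qed

lemma Mq_upper: "lin_op T \<Longrightarrow> f \<in> L2 M \<Longrightarrow> N f \<le> 1 \<Longrightarrow> Re (ip M f (T f)) \<le> Mq T"
  unfolding Mq_def by (rule cSup_upper[OF _ Mq_props(1)]) auto

lemma Mq_least: "lin_op T \<Longrightarrow> (\<And>f. f \<in> L2 M \<Longrightarrow> N f \<le> 1 \<Longrightarrow> Re (ip M f (T f)) \<le> C) \<Longrightarrow> Mq T \<le> C"
  unfolding Mq_def by (rule cSup_least[OF Mq_props(2)]) auto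

lemma Mq_nonneg: assumes T: "lin_op T" shows "0 \<le> Mq T"
proof -
  have "Re (ip M (\<lambda>x. 0) (T (\<lambda>x. 0))) \<le> Mq T" by (rule Mq_upper[OF T L2_zero]) simp
  then show ?thesis by (simp add: ip_def)
qed

lemma Mq_approx: assumes T: "lin_op T" and e: "e > 0"
  obtains f where "f \<in> L2 M" "N f \<le> 1" "Mq T - e < Re (ip M f (T f))"
proof -
  have "Mq T - e < Mq T" using e by simp
  then obtain x where "x \<in> {Re (ip M f (T f)) | f. f \<in> L2 M \<and> N f \<le> 1}" "Mq T - e < x"
    unfolding Mq_def[of T] by (rule less_cSupE[OF _ Mq_props(2)[OF T]])
  then show ?thesis using that by blast
qed

lemma Q_le: assumes T: "lin_op T" and f: "f \<in> L2 M"
  shows "Re (ip M f (T f)) \<le> Mq T * (N f)\<^sup>2"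
proof (cases "N f = 0")
  case True
  then show ?thesis using ip_zero_l[OF f lin_L2[OF T f]] by simp
next
  case False
  then have nf: "N f > 0" using N_nonneg[of f] by simp
  define u where "u = (\<lambda>y. complex_of_real (1 / N f) * f y)"
  have u: "u \<in> L2 M" unfolding u_def by (rule L2_scale[OF f])
  have Nu: "N u = 1" unfolding u_def N_scale using nf by (simp add: norm_divide)
  have Tu: "T u = (\<lambda>x. complex_of_real (1 / N f) * T f x)" unfolding u_def by (rule lin_scale[OF T f])
  have "ip M u (T u) = complex_of_real (1 / N f) * (cnj (complex_of_real (1 / N f)) * ip M f (T f))"
    unfolding Tu ip_scale unfolding u_def ip_scale_l ..
  then have "Re (ip M u (T u)) = Re (ip M f (T f)) / (N f)\<^sup>2"
    by (simp add: power2_eq_square)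
  moreover have "Re (ip M u (T u)) \<le> Mq T" using Mq_upper[OF T u] Nu by simp
  ultimately show ?thesis using nf by (simp add: divide_le_eq mult.commute)
qed

lemma polar: assumes T: "lin_op T" and sa: "selfadjoint_op M T" and f: "f \<in> L2 M" and g: "g \<in> L2 M"
  shows "4 * Re (ip M g (T f)) = Re (ip M (\<lambda>x. f x + g x) (T (\<lambda>x. f x + g x))) - Re (ip M (\<lambda>x. f x - g x) (T (\<lambda>x. f x - g x)))"
proof -
  have Tf: "T f \<in> L2 M" and Tg: "T g \<in> L2 M" using lin_L2[OF T] f g by auto
  have p: "ip M (\<lambda>x. f x + g x) (T (\<lambda>x. f x + g x)) = ip M f (T f) + ip M f (T g) + ip M g (T f) + ip M g (T g)"
    unfolding lin_add[OF T f g] ip_add_l[OF f g L2_add[OF Tf Tg]] ip_add[OF f Tf Tg] ip_add[OF g Tf Tg] by simp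
  have m: "ip M (\<lambda>x. f x - g x) (T (\<lambda>x. f x - g x)) = ip M f (T f) - ip M f (T g) - ip M g (T f) + ip M g (T g)"
    unfolding lin_diff[OF T f g] ip_diff_l[OF f g L2_diff[OF Tf Tg]] ip_diff[OF f Tf Tg] ip_diff[OF g Tf Tg] by simp
  have s: "ip M f (T g) = cnj (ip M g (T f))"
    using sa f g unfolding selfadjoint_op_def by (metis ip_sym)
  show ?thesis unfolding p m s by simp
qed

lemma N_diff_sq: assumes f: "f \<in> L2 M" and g: "g \<in> L2 M"
  shows "(N (\<lambda>x. f x - g x))\<^sup>2 = (N f)\<^sup>2 + (N g)\<^sup>2 - 2 * Re (ip M f g)"
proof -
  have "(N (\<lambda>x. f x + - g x))\<^sup>2 = (N f)\<^sup>2 + (N (\<lambda>x. - g x))\<^sup>2 + 2 * Re (ip M f (\<lambda>x. - g x))"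
    by (rule N_add_sq[OF f L2_minus[OF g]])
  moreover have "ip M f (\<lambda>x. - g x) = - ip M f g" using ip_scale[of f "-1" g] by simp
  ultimately show ?thesis using N_minus[of g] by simp
qed

lemma normbound: assumes T: "lin_op T" and sa: "selfadjoint_op M T" and pos: "positive_op M T"
  and f: "f \<in> L2 M"
  shows "N (T f) \<le> Mq T * N f"
proof -
  obtain B where B: "0 \<le> B" "\<And>f. f \<in> L2 M \<Longrightarrow> N (T f) \<le> B * N f" using lin_bound[OF T] by blast
  have Tf: "T f \<in> L2 M" by (rule lin_L2[OF T f])
  have M0: "0 \<le> Mq T" by (rule Mq_nonneg[OF T])
  show ?thesis
  proof (cases "N f = 0 \<or> N (T f) = 0")
    case True
    then show ?thesis
    proof
      assume "N f = 0" then show ?thesis using B(2)[OF f] N_nonneg[of "T f"] by simp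
    next
      assume "N (T f) = 0" then show ?thesis using M0 N_nonneg[of f] by simp
    qed
  next
    case False
    then have F: "N f > 0" and X: "N (T f) > 0" using N_nonneg[of f] N_nonneg[of "T f"] by auto
    define s where "s = N f / N (T f)"
    have s0: "s > 0" using F X by (simp add: s_def)
    define g where "g = (\<lambda>x. complex_of_real s * T f x)"
    have g: "g \<in> L2 M" unfolding g_def by (rule L2_scale[OF Tf])
    have Ng: "N g = s * N (T f)" unfolding g_def N_scale using s0 by simp
    have ipg: "Re (ip M g (T f)) = s * (N (T f))\<^sup>2"
      unfolding g_def ip_scale_l ip_self[OF Tf] by simp
    have fpg: "(\<lambda>x. f x + g x) \<in> L2 M" by (rule L2_add[OF f g])
    have fmg: "(\<lambda>x. f x - g x) \<in> L2 M" by (rule L2_diff[OF f g])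
    have q1: "Re (ip M (\<lambda>x. f x + g x) (T (\<lambda>x. f x + g x))) \<le> Mq T * (N (\<lambda>x. f x + g x))\<^sup>2"
      by (rule Q_le[OF T fpg])
    have q2: "0 \<le> Re (ip M (\<lambda>x. f x - g x) (T (\<lambda>x. f x - g x)))"
      using pos fmg unfolding positive_op_def by blast
    have q3: "0 \<le> Mq T * (N (\<lambda>x. f x - g x))\<^sup>2" using M0 by simp
    have "4 * (s * (N (T f))\<^sup>2) \<le> Mq T * ((N (\<lambda>x. f x + g x))\<^sup>2 + (N (\<lambda>x. f x - g x))\<^sup>2)"
      using polar[OF T sa f g] ipg q1 q2 q3 by (simp add: algebra_simps)
    also have "(N (\<lambda>x. f x + g x))\<^sup>2 + (N (\<lambda>x. f x - g x))\<^sup>2 = 2 * (N f)\<^sup>2 + 2 * (N g)\<^sup>2"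
      using N_add_sq[OF f g] N_diff_sq[OF f g] by simp
    also have "N g = N f" unfolding Ng s_def using X by simp
    finally have h: "4 * (s * (N (T f))\<^sup>2) \<le> Mq T * (4 * (N f)\<^sup>2)" by simp
    have sX: "s * N (T f) = N f" unfolding s_def using X by simp
    have e: "s * (N (T f))\<^sup>2 = N f * N (T f)" unfolding power2_eq_square mult.assoc[symmetric] sX ..
    have e2: "Mq T * (4 * (N f)\<^sup>2) = 4 * (N f * (Mq T * N f))" by (simp add: power2_eq_square)
    have "4 * (N f * N (T f)) \<le> 4 * (N f * (Mq T * N f))" using h[unfolded e e2] .
    then have "N f * N (T f) \<le> N f * (Mq T * N f)" by simp
    then show ?thesis using F by simp
  qed
qed

lemma eig_le: assumes T: "lin_op T" and e: "is_eigenvalue M T l" shows "l \<le> Mq T"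
proof -
  obtain f where f: "f \<in> L2 M" "N f \<noteq> 0" "N (\<lambda>x. T f x - complex_of_real l * f x) = 0"
    using e unfolding is_eigenvalue_def by blast
  have Tf: "T f \<in> L2 M" by (rule lin_L2[OF T f(1)])
  have lf: "(\<lambda>x. complex_of_real l * f x) \<in> L2 M" by (rule L2_scale[OF f(1)])
  have d: "(\<lambda>x. T f x - complex_of_real l * f x) \<in> L2 M" by (rule L2_diff[OF Tf lf])
  have "ip M f (\<lambda>x. T f x - complex_of_real l * f x) = 0" by (rule ip_zero_r[OF f(1) d f(3)])
  then have "ip M f (T f) = ip M f (\<lambda>x. complex_of_real l * f x)" using ip_diff[OF f(1) Tf lf] by simp
  also have "\<dots> = complex_of_real (l * (N f)\<^sup>2)" unfolding ip_scale ip_self[OF f(1)] by simp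
  finally have "l * (N f)\<^sup>2 \<le> Mq T * (N f)\<^sup>2" using Q_le[OF T f(1)] by simp
  moreover have "(N f)\<^sup>2 > 0" using f(2) by simp
  ultimately show ?thesis by simp
qed

end

context mup
begin

lemma sandwich0: fixes X Y :: "nat \<Rightarrow> real"
  assumes "\<And>k. 0 \<le> X k" "\<And>k. X k \<le> Y k" "Y \<longlonglongrightarrow> 0" shows "X \<longlonglongrightarrow> 0"
  by (rule tendsto_sandwich[of "\<lambda>k. 0" X sequentially Y 0]) (use assms in auto)

lemma Mq_eig: assumes T: "lin_op T" and sa: "selfadjoint_op M T" and pos: "positive_op M T"
  and cp: "compact_op M T"
  shows "is_eigenvalue M T (Mq T)"
proof (cases "Mq T = 0")
  case True
  have one: "(\<lambda>x. 1) \<in> L2 M" by (rule L2_const)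
  have "N (T (\<lambda>x. 1)) \<le> Mq T * N (\<lambda>x. 1)" by (rule normbound[OF T sa pos one])
  then have "N (T (\<lambda>x. 1)) = 0" using True N_nonneg[of "T (\<lambda>x. 1)"] by simp
  then show ?thesis unfolding is_eigenvalue_def using one N_one True by (intro bexI[of _ "\<lambda>x. 1"]) auto
next
  case False
  define M0 where "M0 = Mq T"
  have M0: "M0 > 0" using False Mq_nonneg[OF T] by (simp add: M0_def)
  have "\<forall>k. \<exists>f. f \<in> L2 M \<and> N f \<le> 1 \<and> M0 - inverse (real (Suc k)) < Re (ip M f (T f))"
  proof
    fix k
    obtain f where "f \<in> L2 M" "N f \<le> 1" "Mq T - inverse (real (Suc k)) < Re (ip M f (T f))"
      by (rule Mq_approx[OF T, of "inverse (real (Suc k))"]) auto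
    then show "\<exists>f. f \<in> L2 M \<and> N f \<le> 1 \<and> M0 - inverse (real (Suc k)) < Re (ip M f (T f))"
      unfolding M0_def by blast
  qed
  then obtain F where F: "\<And>k. F k \<in> L2 M" "\<And>k. N (F k) \<le> 1"
    "\<And>k. M0 - inverse (real (Suc k)) < Re (ip M (F k) (T (F k)))" by metis
  obtain rr g where rr: "strict_mono rr" and g: "g \<in> L2 M"
    and cv: "(\<lambda>k. N (\<lambda>x. T (F (rr k)) x - g x)) \<longlonglongrightarrow> 0"
    using cp F(1,2) unfolding compact_op_def by blast
  define h where "h k = F (rr k)" for k
  define q where "q k = Re (ip M (h k) (T (h k)))" for k
  define c where "c k = N (\<lambda>x. T (h k) x - g x)" for k
  have h: "h k \<in> L2 M" "N (h k) \<le> 1" for k using F unfolding h_def by auto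
  have Th: "T (h k) \<in> L2 M" for k by (rule lin_L2[OF T h(1)])
  have c: "c \<longlonglongrightarrow> 0" using cv unfolding c_def h_def .
  have qM: "q k \<le> M0" for k unfolding q_def M0_def by (rule Mq_upper[OF T h])
  have ql: "M0 - inverse (real (Suc (rr k))) < q k" for k unfolding q_def h_def by (rule F(3))
  have q: "q \<longlonglongrightarrow> M0"
  proof (rule tendsto_sandwich[of "\<lambda>k. M0 - inverse (real (Suc (rr k)))" q sequentially "\<lambda>k. M0"])
    show "\<forall>\<^sub>F k in sequentially. M0 - inverse (real (Suc (rr k))) \<le> q k"
      by (rule always_eventually, rule allI, rule less_imp_le, rule ql)
    show "\<forall>\<^sub>F k in sequentially. q k \<le> M0"
      by (rule always_eventually, rule allI, rule qM)
    have "(\<lambda>k. inverse (real (Suc (rr k)))) \<longlonglongrightarrow> 0"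
      using LIMSEQ_subseq_LIMSEQ[OF LIMSEQ_inverse_real_of_nat rr] by (simp add: comp_def)
    then show "(\<lambda>k. M0 - inverse (real (Suc (rr k)))) \<longlonglongrightarrow> M0"
      using tendsto_diff[OF tendsto_const[of M0]] by fastforce
  qed simp
  have NTh: "N (T (h k)) \<le> M0" for k
  proof -
    have "N (T (h k)) \<le> M0 * N (h k)" unfolding M0_def by (rule normbound[OF T sa pos h(1)])
    also have "\<dots> \<le> M0 * 1" using M0 h(2) by (intro mult_left_mono) auto
    finally show ?thesis by simp
  qed
  define d where "d k = N (\<lambda>x. T (h k) x - complex_of_real M0 * h k x)" for k
  have Mh: "(\<lambda>x. complex_of_real M0 * h k x) \<in> L2 M" for k by (rule L2_scale[OF h(1)])
  have d2: "(d k)\<^sup>2 \<le> 2 * M0 * (M0 - q k)" for k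
  proof -
    have "(d k)\<^sup>2 = (N (T (h k)))\<^sup>2 + (N (\<lambda>x. complex_of_real M0 * h k x))\<^sup>2
        - 2 * Re (ip M (T (h k)) (\<lambda>x. complex_of_real M0 * h k x))"
      unfolding d_def by (rule N_diff_sq[OF Th Mh])
    also have "Re (ip M (T (h k)) (\<lambda>x. complex_of_real M0 * h k x)) = M0 * q k"
      unfolding ip_scale q_def using ip_sym[of "h k" "T (h k)"] by simp
    also have "N (\<lambda>x. complex_of_real M0 * h k x) = M0 * N (h k)" unfolding N_scale using M0 by simp
    also have "(M0 * N (h k))\<^sup>2 \<le> M0\<^sup>2"
      using M0 h(2)[of k] N_nonneg[of "h k"] by (simp add: power_mult_distrib power_le_one)
    also have "(N (T (h k)))\<^sup>2 \<le> M0\<^sup>2" using NTh[of k] N_nonneg[of "T (h k)"] by (simp add: power_mono)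
    finally show ?thesis by (simp add: power2_eq_square algebra_simps)
  qed
  have d: "d \<longlonglongrightarrow> 0"
  proof (rule sandwich0)
    show "0 \<le> d k" for k unfolding d_def by (rule N_nonneg)
    show "d k \<le> sqrt (2 * M0 * (M0 - q k))" for k
      using real_sqrt_le_mono[OF d2[of k]] N_nonneg by (simp add: d_def)
    have "(\<lambda>k. sqrt (2 * M0 * (M0 - q k))) \<longlonglongrightarrow> sqrt (2 * M0 * (M0 - M0))"
      by (intro tendsto_intros q)
    then show "(\<lambda>k. sqrt (2 * M0 * (M0 - q k))) \<longlonglongrightarrow> 0" by simp
  qed
  define e where "e k = N (\<lambda>x. complex_of_real M0 * h k x - g x)" for k
  have e_le: "e k \<le> d k + c k" for k
  proof -
    have "e k \<le> N (\<lambda>x. complex_of_real M0 * h k x - T (h k) x) + N (\<lambda>x. T (h k) x - g x)"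
      unfolding e_def by (rule N_tri[OF Mh Th g])
    then show ?thesis unfolding d_def c_def using N_commute by metis
  qed
  have e: "e \<longlonglongrightarrow> 0"
  proof (rule sandwich0)
    show "0 \<le> e k" for k unfolding e_def by (rule N_nonneg)
    show "e k \<le> d k + c k" for k by (rule e_le)
    show "(\<lambda>k. d k + c k) \<longlonglongrightarrow> 0" using tendsto_add[OF d c] by simp
  qed
  have qg: "q k \<le> e k + N g" for k
  proof -
    have "q k \<le> N (h k) * N (T (h k))" unfolding q_def by (rule Q_le_N[OF h(1) Th])
    also have "\<dots> \<le> N (h k) * M0" by (rule mult_left_mono[OF NTh N_nonneg])
    also have "\<dots> = N (\<lambda>x. complex_of_real M0 * h k x)" unfolding N_scale using M0 by simp
    also have "\<dots> = N (\<lambda>x. (complex_of_real M0 * h k x - g x) + g x)" by simp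
    also have "\<dots> \<le> e k + N g" unfolding e_def by (rule N_add[OF L2_diff[OF Mh g] g])
    finally show ?thesis .
  qed
  have Ng: "M0 \<le> N g"
  proof -
    have "(\<lambda>k. e k + N g) \<longlonglongrightarrow> 0 + N g" by (intro tendsto_intros e)
    then show ?thesis using q qg by (intro tendsto_le[of sequentially "\<lambda>k. e k + N g" "N g" q M0]) auto
  qed
  have Tg: "T g \<in> L2 M" by (rule lin_L2[OF T g])
  have Mg: "(\<lambda>x. complex_of_real M0 * g x) \<in> L2 M" by (rule L2_scale[OF g])
  have TMh: "T (\<lambda>x. complex_of_real M0 * h k x) \<in> L2 M" for k by (rule lin_L2[OF T Mh])
  have eig_le: "N (\<lambda>x. T g x - complex_of_real M0 * g x) \<le> M0 * e k + M0 * c k" for k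
  proof -
    have t: "N (\<lambda>x. T g x - complex_of_real M0 * g x)
        \<le> N (\<lambda>x. T g x - T (\<lambda>x. complex_of_real M0 * h k x) x)
          + N (\<lambda>x. T (\<lambda>x. complex_of_real M0 * h k x) x - complex_of_real M0 * g x)"
      by (rule N_tri[OF Tg TMh Mg])
    have a1: "N (\<lambda>x. T g x - T (\<lambda>x. complex_of_real M0 * h k x) x) = N (T (\<lambda>x. g x - complex_of_real M0 * h k x))"
      unfolding lin_diff[OF T g Mh] ..
    have a2: "N (T (\<lambda>x. g x - complex_of_real M0 * h k x)) \<le> M0 * N (\<lambda>x. g x - complex_of_real M0 * h k x)"
      using normbound[OF T sa pos L2_diff[OF g Mh]] unfolding M0_def .
    have a3: "N (\<lambda>x. g x - complex_of_real M0 * h k x) = e k" unfolding e_def by (rule N_commute)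
    have b1: "N (\<lambda>x. T (\<lambda>x. complex_of_real M0 * h k x) x - complex_of_real M0 * g x)
        = N (\<lambda>x. complex_of_real M0 * (T (h k) x - g x))"
      unfolding lin_scale[OF T h(1)] by (simp add: right_diff_distrib)
    have b2: "N (\<lambda>x. complex_of_real M0 * (T (h k) x - g x)) = M0 * c k" unfolding N_scale c_def using M0 by simp
    have a4: "N (T (\<lambda>x. g x - complex_of_real M0 * h k x)) \<le> M0 * e k" using a2 unfolding a3 .
    show ?thesis using t a1 a4 b1 b2 by linarith
  qed
  have z: "N (\<lambda>x. T g x - complex_of_real M0 * g x) \<le> 0"
  proof (rule tendsto_le[of sequentially "\<lambda>k. M0 * e k + M0 * c k" 0 "\<lambda>k. N (\<lambda>x. T g x - complex_of_real M0 * g x)"])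
    show "(\<lambda>k. M0 * e k + M0 * c k) \<longlonglongrightarrow> 0" using tendsto_add[OF tendsto_mult_right_zero[OF e] tendsto_mult_right_zero[OF c]] by simp
  qed (use eig_le in auto)
  have "N (\<lambda>x. T g x - complex_of_real M0 * g x) = 0" using z N_nonneg by (simp add: antisym)
  moreover have "N g \<noteq> 0" using Ng M0 by simp
  ultimately show ?thesis unfolding is_eigenvalue_def M0_def using g by blast
qed

lemma lambda_max_Mq: assumes T: "lin_op T" and sa: "selfadjoint_op M T" and pos: "positive_op M T"
  and cp: "compact_op M T"
  shows "lambda_max M T = Mq T"
  unfolding lambda_max_def
proof (rule Greatest_equality)
  show "is_eigenvalue M T (Mq T)" by (rule Mq_eig[OF assms])
next
  fix y assume "is_eigenvalue M T y" then show "y \<le> Mq T" by (rule eig_le[OF T])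
qed

lemma weyl1: assumes T: "lin_op T" and U: "lin_op U"
  shows "Mq T \<le> Mq U + opnorm M (op_diff T U)"
proof (rule Mq_least[OF T])
  fix f assume f: "f \<in> L2 M" "N f \<le> 1"
  have D: "lin_op (op_diff T U)" by (rule lin_op_diff[OF T U])
  obtain C where C: "\<And>f. f \<in> L2 M \<Longrightarrow> N f \<le> 1 \<Longrightarrow> N (op_diff T U f) \<le> C" using lin_unit[OF D] by blast
  have Tf: "T f \<in> L2 M" and Uf: "U f \<in> L2 M" using lin_L2 T U f by auto
  have "ip M f (op_diff T U f) = ip M f (T f) - ip M f (U f)" unfolding op_diff_def by (rule ip_diff[OF f(1) Tf Uf])
  then have "Re (ip M f (T f)) = Re (ip M f (U f)) + Re (ip M f (op_diff T U f))" by simp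
  also have "\<dots> \<le> Mq U + N f * N (op_diff T U f)"
    by (intro add_mono Mq_upper[OF U f] Q_le_N[OF f(1) lin_L2[OF D f(1)]])
  also have "N f * N (op_diff T U f) \<le> 1 * N (op_diff T U f)" by (rule mult_right_mono[OF f(2) N_nonneg])
  also have "\<dots> \<le> opnorm M (op_diff T U)" using opnorm_ge[OF C f] by simp
  finally show "Re (ip M f (T f)) \<le> Mq U + opnorm M (op_diff T U)" by simp
qed

lemma opnorm_diff_sym: "opnorm M (op_diff T U) = opnorm M (op_diff U T)"
  unfolding op_diff_def by (rule opnorm_cong) (rule N_commute)

lemma weyl: assumes T: "lin_op T" and U: "lin_op U"
  shows "\<bar>Mq T - Mq U\<bar> \<le> opnorm M (op_diff T U)"
  using weyl1[OF T U] weyl1[OF U T] opnorm_diff_sym[of T U] by linarith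



definition aeq :: "op \<Rightarrow> op \<Rightarrow> bool" where
  "aeq T T' \<longleftrightarrow> (\<forall>f\<in>L2 M. T f \<in> L2 M \<and> T' f \<in> L2 M \<and> N (\<lambda>x. T f x - T' f x) = 0)"

lemma eig_transfer: assumes "aeq T T'" "is_eigenvalue M T' l" shows "is_eigenvalue M T l"
proof -
  obtain f where f: "f \<in> L2 M" "N f \<noteq> 0" "N (\<lambda>x. T' f x - complex_of_real l * f x) = 0"
    using assms(2) unfolding is_eigenvalue_def by blast
  have a: "T f \<in> L2 M" "T' f \<in> L2 M" "N (\<lambda>x. T f x - T' f x) = 0" using assms(1) f(1) unfolding aeq_def by auto
  have "N (\<lambda>x. T f x - complex_of_real l * f x) \<le> N (\<lambda>x. T f x - T' f x) + N (\<lambda>x. T' f x - complex_of_real l * f x)"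
    by (rule N_tri[OF a(1) a(2) L2_scale[OF f(1)]])
  then have "N (\<lambda>x. T f x - complex_of_real l * f x) = 0" using a(3) f(3) N_nonneg by (simp add: antisym)
  then show ?thesis unfolding is_eigenvalue_def using f by blast
qed

lemma aeq_sym: "aeq T T' \<Longrightarrow> aeq T' T"
  unfolding aeq_def using N_commute by metis

lemma lambda_transfer: assumes "aeq T T'" shows "lambda_max M T = lambda_max M T'"
proof -
  have "is_eigenvalue M T = is_eigenvalue M T'"
    using eig_transfer[OF assms] eig_transfer[OF aeq_sym[OF assms]] by blast
  then show ?thesis unfolding lambda_max_def by simp
qed

lemma compact_transfer: assumes ae: "aeq T T'" and cp: "compact_op M T'" shows "compact_op M T"
  unfolding compact_op_def
proof (intro allI impI)
  fix F :: "nat \<Rightarrow> real \<Rightarrow> complex" assume F: "\<forall>k. F k \<in> L2 M \<and> N (F k) \<le> 1"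
  obtain rr g where rr: "strict_mono rr" "g \<in> L2 M" "(\<lambda>k. N (\<lambda>x. T' (F (rr k)) x - g x)) \<longlonglongrightarrow> 0"
    using cp F unfolding compact_op_def by blast
  have "(\<lambda>k. N (\<lambda>x. T (F (rr k)) x - g x)) \<longlonglongrightarrow> 0"
  proof (rule sandwich0)
    fix k
    have a: "T (F (rr k)) \<in> L2 M" "T' (F (rr k)) \<in> L2 M" "N (\<lambda>x. T (F (rr k)) x - T' (F (rr k)) x) = 0"
      using ae F unfolding aeq_def by auto
    show "N (\<lambda>x. T (F (rr k)) x - g x) \<le> N (\<lambda>x. T' (F (rr k)) x - g x)"
      using N_tri[OF a(1) a(2) rr(2)] a(3) by simp
  qed (auto simp: N_nonneg rr(3))
  then show "\<exists>r g. strict_mono r \<and> g \<in> L2 M \<and> (\<lambda>k. N (\<lambda>x. T (F (r k)) x - g x)) \<longlonglongrightarrow> 0"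
    using rr by blast
qed

lemma ip_transfer: assumes ae: "aeq T T'" and f: "f \<in> L2 M" and g: "g \<in> L2 M"
  shows "ip M g (T f) = ip M g (T' f)"
proof -
  have a: "T f \<in> L2 M" "T' f \<in> L2 M" "N (\<lambda>x. T f x - T' f x) = 0" using ae f unfolding aeq_def by auto
  have "ip M g (\<lambda>x. T f x - T' f x) = 0" by (rule ip_zero_r[OF g L2_diff[OF a(1) a(2)] a(3)])
  then show ?thesis using ip_diff[OF g a(1) a(2)] by simp
qed

lemma pos_transfer: "aeq T T' \<Longrightarrow> positive_op M T' \<Longrightarrow> positive_op M T"
  unfolding positive_op_def using ip_transfer by simp

lemma sa_transfer: assumes ae: "aeq T T'" and sa: "selfadjoint_op M T'" shows "selfadjoint_op M T"
  unfolding selfadjoint_op_def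
proof (intro ballI)
  fix f g assume f: "f \<in> L2 M" and g: "g \<in> L2 M"
  have "ip M (T f) g = cnj (ip M g (T f))" by (rule ip_sym)
  also have "\<dots> = cnj (ip M g (T' f))" using ip_transfer[OF ae f g] by simp
  also have "\<dots> = ip M (T' f) g" by (rule ip_sym[symmetric])
  also have "\<dots> = ip M f (T' g)" using sa f g unfolding selfadjoint_op_def by blast
  also have "\<dots> = ip M f (T g)" using ip_transfer[OF ae g f] by simp
  finally show "ip M (T f) g = ip M f (T g)" .
qed

end

lemma diag_conv:
  fixes a :: "nat \<Rightarrow> nat list \<Rightarrow> complex"
  assumes bd: "\<And>k w. cmod (a k w) \<le> B"
  shows "\<exists>rr. strict_mono rr \<and> (\<forall>w. convergent (\<lambda>k. a (rr k) w))"
proof -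
  define P where "P n s \<longleftrightarrow> convergent (\<lambda>k. a (s k) (from_nat n))" for n and s :: "nat \<Rightarrow> nat"
  interpret subseqs P
  proof
    fix n and s :: "nat \<Rightarrow> nat" assume "strict_mono s"
    have "bounded (range (\<lambda>k. a (s k) (from_nat n)))"
      using bd by (intro boundedI[where B=B]) auto
    then obtain l r' where "strict_mono r'" "((\<lambda>k. a (s k) (from_nat n)) \<circ> r') \<longlonglongrightarrow> l"
      using bounded_imp_convergent_subsequence by blast
    then show "\<exists>r'. strict_mono r' \<and> P n (s \<circ> r')"
      unfolding P_def convergent_def by (auto simp: comp_def)
  qed
  have Pd: "\<And>n s. P n s = convergent (\<lambda>k. a (s k) (from_nat n))" by (simp add: P_def)
  have h1: "P n (diagseq \<circ> (+) (Suc n))" for n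
  proof (rule diagseq_holds)
    fix r s n assume "strict_mono (r :: nat \<Rightarrow> nat)" "P n s"
    then show "P n (s \<circ> r)" unfolding Pd
      using convergent_subseq_convergent[of "\<lambda>k. a (s k) (from_nat n)" r] by (simp add: comp_def)
  qed
  obtain D where D: "strict_mono D" "\<And>n. P n (D \<circ> (+) (Suc n))"
    using h1 subseq_diagseq by blast
  have "convergent (\<lambda>k. a (D k) w)" for w
  proof -
    have "convergent (\<lambda>k. a (D (k + Suc (to_nat w))) (from_nat (to_nat w)))"
      using D(2)[of "to_nat w"] unfolding Pd by (simp add: comp_def add.commute)
    then have "convergent (\<lambda>k. a (D k) (from_nat (to_nat w)))"
      using convergent_ignore_initial_segment[of "\<lambda>k. a (D k) (from_nat (to_nat w))" "Suc (to_nat w)"] by simp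
    then show ?thesis by simp
  qed
  then show ?thesis using D(1) by blast
qed

context mup
begin

lemma cnj_mult_self: "cnj z * z = complex_of_real ((cmod z)\<^sup>2)"
  by (metis complex_norm_square mult.commute of_real_power)

lemma ip_lev: assumes f: "f \<in> L2 M"
  shows "ip M f (lev n c) = (\<Sum>w\<in>words n. cnj (coef f w) * c w)"
proof -
  have "lev n c = (\<lambda>x. \<Sum>w\<in>words n. c w * ind w x)" by (rule ext) (simp add: lev_def)
  then have "ip M f (lev n c) = (\<Sum>w\<in>words n. ip M f (\<lambda>x. c w * ind w x))"
    using ip_sum[OF finite_words f L2_scale[OF ind_L2]] by simp
  also have "\<dots> = (\<Sum>w\<in>words n. cnj (coef f w) * c w)"
    unfolding ip_scale coef_def using ip_sym[of f "ind _"] by (simp add: mult.commute)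
  finally show ?thesis .
qed

lemma ip_Kop: assumes f: "f \<in> L2 M" and g: "g \<in> L2 M"
  shows "ip M f (Kop M m g) = (\<Sum>n\<le>m. \<Sum>w\<in>words n. cnj (coef f w) * coef g w)"
  unfolding Kop_fun using ip_sum[OF finite_atMost f lev_L2] ip_lev[OF f] by simp

lemma Kop_sa: "selfadjoint_op M (Kop M m)"
  unfolding selfadjoint_op_def
proof (intro ballI)
  fix f g assume f: "f \<in> L2 M" and g: "g \<in> L2 M"
  have "ip M (Kop M m f) g = cnj (ip M g (Kop M m f))" by (rule ip_sym)
  also have "\<dots> = ip M f (Kop M m g)" unfolding ip_Kop[OF g f] ip_Kop[OF f g]
    by (simp add: mult.commute)
  finally show "ip M (Kop M m f) g = ip M f (Kop M m g)" .
qed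

lemma Kop_pos: "positive_op M (Kop M m)"
  unfolding positive_op_def
proof (intro ballI conjI)
  fix f assume f: "f \<in> L2 M"
  have e: "ip M f (Kop M m f) = complex_of_real (\<Sum>n\<le>m. \<Sum>w\<in>words n. (cmod (coef f w))\<^sup>2)"
    unfolding ip_Kop[OF f f] cnj_mult_self by simp
  show "Im (ip M f (Kop M m f)) = 0" unfolding e by simp
  show "0 \<le> Re (ip M f (Kop M m f))" unfolding e by (simp add: sum_nonneg)
qed

lemma ip_Kop_lim: assumes f: "f \<in> L2 M" and g: "g \<in> L2 M"
  shows "(\<lambda>m. ip M f (Kop M m g)) \<longlonglongrightarrow> ip M f (Kinf g)"
proof -
  have Kg: "Kop M m g \<in> L2 M" for m by (rule lin_L2[OF Kop_lin_op g])
  have Ig: "Kinf g \<in> L2 M" by (rule lin_L2[OF Kinf_lin_op g])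
  have "(\<lambda>m. cmod (ip M f (Kinf g) - ip M f (Kop M m g))) \<longlonglongrightarrow> 0"
  proof (rule sandwich0)
    fix m
    have "ip M f (Kinf g) - ip M f (Kop M m g) = ip M f (op_diff Kinf (Kop M m) g)"
      unfolding op_diff_def by (rule ip_diff[OF f Ig Kg, symmetric])
    then have "cmod (ip M f (Kinf g) - ip M f (Kop M m g)) \<le> N f * N (op_diff Kinf (Kop M m) g)"
      using CS[OF f lin_L2[OF lin_op_diff[OF Kinf_lin_op Kop_lin_op] g]] by simp
    also have "\<dots> \<le> N f * (tm m * N g)" by (rule mult_left_mono[OF N_Kinf_diff[OF g] N_nonneg])
    finally show "cmod (ip M f (Kinf g) - ip M f (Kop M m g)) \<le> N f * (tm m * N g)" .
    show "(\<lambda>m. N f * (tm m * N g)) \<longlonglongrightarrow> 0"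
      using tendsto_mult_right_zero[OF tendsto_mult_left_zero[OF tm_lim]] by simp
  qed simp
  then have "(\<lambda>m. ip M f (Kinf g) - ip M f (Kop M m g)) \<longlonglongrightarrow> 0"
    by (simp add: tendsto_norm_zero_iff)
  from tendsto_diff[OF tendsto_const[of "ip M f (Kinf g)"] this] show ?thesis by simp
qed

lemma Kinf_sa: "selfadjoint_op M Kinf"
  unfolding selfadjoint_op_def
proof (intro ballI)
  fix f g assume f: "f \<in> L2 M" and g: "g \<in> L2 M"
  have l1: "(\<lambda>m. ip M f (Kop M m g)) \<longlonglongrightarrow> ip M f (Kinf g)" by (rule ip_Kop_lim[OF f g])
  have "(\<lambda>m. cnj (ip M g (Kop M m f))) \<longlonglongrightarrow> cnj (ip M g (Kinf f))"
    by (intro tendsto_intros ip_Kop_lim[OF g f])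
  moreover have "cnj (ip M g (Kop M m f)) = ip M f (Kop M m g)" for m
    using Kop_sa f g unfolding selfadjoint_op_def by (metis ip_sym)
  ultimately have l2: "(\<lambda>m. ip M f (Kop M m g)) \<longlonglongrightarrow> cnj (ip M g (Kinf f))" by simp
  have "ip M f (Kinf g) = cnj (ip M g (Kinf f))" using LIMSEQ_unique[OF l1 l2] .
  then show "ip M (Kinf f) g = ip M f (Kinf g)" using ip_sym[of g "Kinf f"] by simp
qed

lemma Kinf_pos: "positive_op M Kinf"
  unfolding positive_op_def
proof (intro ballI conjI)
  fix f assume f: "f \<in> L2 M"
  have l: "(\<lambda>m. ip M f (Kop M m f)) \<longlonglongrightarrow> ip M f (Kinf f)" by (rule ip_Kop_lim[OF f f])
  have p: "Im (ip M f (Kop M m f)) = 0 \<and> 0 \<le> Re (ip M f (Kop M m f))" for m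
    using Kop_pos f unfolding positive_op_def by blast
  have "(\<lambda>m. Im (ip M f (Kop M m f))) \<longlonglongrightarrow> Im (ip M f (Kinf f))" by (intro tendsto_intros l)
  then have "(\<lambda>m. 0::real) \<longlonglongrightarrow> Im (ip M f (Kinf f))" using p by simp
  then show "Im (ip M f (Kinf f)) = 0" using LIMSEQ_unique[OF tendsto_const] by metis
  have "(\<lambda>m. Re (ip M f (Kop M m f))) \<longlonglongrightarrow> Re (ip M f (Kinf f))" by (intro tendsto_intros l)
  then show "0 \<le> Re (ip M f (Kinf f))" using p by (intro LIMSEQ_le_const) auto
qed

end

context mup
begin

lemma compact_setup:
  fixes F :: "nat \<Rightarrow> real \<Rightarrow> complex"
  assumes F: "\<And>k. F k \<in> L2 M" "\<And>k. N (F k) \<le> 1"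
  shows "\<exists>rr c. strict_mono rr \<and> (\<forall>w. (\<lambda>k. coef (F (rr k)) w) \<longlonglongrightarrow> c w) \<and>
    good 1 c \<and> (\<forall>n. Lv n c \<le> a ^ n)"
proof -
  have bd: "cmod (coef (F k) w) \<le> 1" for k w
  proof -
    have "cmod (coef (F k) w) \<le> sqrt (mw w) * N (F k)" by (rule coef_bound[OF F(1)])
    also have "\<dots> \<le> 1 * 1"
      using F(2)[of k] N_nonneg[of "F k"] by (intro mult_mono) (auto simp: mw_def prob_le_1)
    finally show ?thesis by simp
  qed
  obtain rr where rr: "strict_mono rr" "\<And>w. convergent (\<lambda>k. coef (F (rr k)) w)"
    using diag_conv[of "\<lambda>k w. coef (F k) w" 1, OF bd] by blast
  define c where "c w = lim (\<lambda>k. coef (F (rr k)) w)" for w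
  have cv: "(\<lambda>k. coef (F (rr k)) w) \<longlonglongrightarrow> c w" for w
    unfolding c_def using rr(2) convergent_LIMSEQ_iff by blast
  have "good 1 c" unfolding good_def
  proof (intro conjI allI ballI)
    fix n w assume w: "w \<in> words n"
    have "cmod (coef (F (rr k)) w) \<le> 1 * r ^ n" for k
    proof -
      have "cmod (coef (F (rr k)) w) \<le> N (F (rr k)) * r ^ n" by (rule coef_bound2[OF F(1) w])
      also have "\<dots> \<le> 1 * r ^ n" using F(2) by (intro mult_right_mono) auto
      finally show ?thesis .
    qed
    then show "cmod (c w) \<le> 1 * r ^ n"
      by (intro LIMSEQ_le_const2[OF tendsto_norm[OF cv]]) auto
  qed simp
  moreover have "Lv n c \<le> a ^ n" for n
  proof -
    have l: "(\<lambda>k. Lv n (coef (F (rr k)))) \<longlonglongrightarrow> Lv n c"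
      unfolding Lv_def by (intro tendsto_intros cv)
    have "Lv n (coef (F (rr k))) \<le> a ^ n" for k
    proof -
      have "Lv n (coef (F (rr k))) \<le> a ^ n * N (F (rr k))" by (rule Lv_coef[OF F(1)])
      also have "\<dots> \<le> a ^ n * 1" using F(2) a_pos by (intro mult_left_mono) auto
      finally show ?thesis by simp
    qed
    then show ?thesis by (intro LIMSEQ_le_const2[OF l]) auto
  qed
  ultimately show ?thesis using rr(1) cv by blast
qed

lemma compact_core:
  fixes F :: "nat \<Rightarrow> real \<Rightarrow> complex"
  assumes F: "\<And>k. F k \<in> L2 M" "\<And>k. N (F k) \<le> 1"
    and rr: "strict_mono rr" and cv: "\<And>w. (\<lambda>k. coef (F (rr k)) w) \<longlonglongrightarrow> c w"
    and gc: "good 1 c" and Lc: "\<And>n. Lv n c \<le> a ^ n"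
    and d_def: "d = (\<lambda>k w. coef (F (rr k)) w - c w)"
  shows "\<And>k. good (N (F (rr k)) + 1) (d k)"
    and "\<And>n k. Lv n (d k) \<le> 2 * a ^ n"
    and "\<And>n. (\<lambda>k. Lv n (d k)) \<longlonglongrightarrow> 0"
proof -
  fix k show "good (N (F (rr k)) + 1) (d k)" unfolding d_def by (rule good_diff[OF good_coef[OF F(1)] gc])
next
  fix n k
  have "lev n (d k) = (\<lambda>x. lev n (coef (F (rr k))) x - lev n c x)"
    unfolding d_def by (rule ext) (rule lev_diff)
  then have "Lv n (d k) = N (\<lambda>x. lev n (coef (F (rr k))) x - lev n c x)" using N_lev[of n "d k"] by simp
  also have "\<dots> \<le> Lv n (coef (F (rr k))) + Lv n c"
    using N_diff[OF lev_L2 lev_L2, of n "coef (F (rr k))" n c] by (simp add: N_lev)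
  also have "\<dots> \<le> a ^ n * N (F (rr k)) + a ^ n" by (intro add_mono Lv_coef[OF F(1)] Lc)
  also have "\<dots> \<le> a ^ n * 1 + a ^ n" using F(2) a_pos by (intro add_mono mult_left_mono) auto
  finally show "Lv n (d k) \<le> 2 * a ^ n" by simp
next
  fix n
  have "(\<lambda>k. Lv n (d k)) \<longlonglongrightarrow> sqrt (\<Sum>w\<in>words n. (cmod (c w - c w))\<^sup>2 * mw w)"
    unfolding d_def Lv_def by (intro tendsto_intros cv)
  then show "(\<lambda>k. Lv n (d k)) \<longlonglongrightarrow> 0" by simp
qed

lemma Kinf_compact: "compact_op M Kinf"
  unfolding compact_op_def
proof (intro allI impI)
  fix F :: "nat \<Rightarrow> real \<Rightarrow> complex" assume FF: "\<forall>k. F k \<in> L2 M \<and> N (F k) \<le> 1"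
  then have F: "\<And>k. F k \<in> L2 M" "\<And>k. N (F k) \<le> 1" by auto
  obtain rr c where rr: "strict_mono rr" and cv: "\<And>w. (\<lambda>k. coef (F (rr k)) w) \<longlonglongrightarrow> c w"
    and gc: "good 1 c" and Lc: "\<And>n. Lv n c \<le> a ^ n"
    using compact_setup[where F=F, OF F] by blast
  define d where "d = (\<lambda>k w. coef (F (rr k)) w - c w)"
  note dd = compact_core[where F=F and d=d, OF F rr cv gc Lc d_def]
  have b: "norm (Lv n (d k)) \<le> 2 * a ^ n" for n k using dd(2)[of n k] Lv_nonneg[of n "d k"] by simp
  have sd: "summable (\<lambda>n. Lv n (d k))" for k
    by (rule summable_comparison_test'[OF summable_a[of 2] b])
  have g: "Syn c \<in> L2 M" unfolding Syn_Tl by (rule Tl_L2[OF gc])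
  have bnd: "N (\<lambda>x. Kinf (F (rr k)) x - Syn c x) \<le> (\<Sum>n. Lv n (d k))" for k
  proof -
    have "(\<lambda>x. Kinf (F (rr k)) x - Syn c x) = Tl 0 (d k)"
      unfolding Kinf_def d_def Syn_Tl[symmetric]
      by (rule ext) (rule Syn_diff[OF good_coef[OF F(1)] gc, symmetric])
    have sd0: "summable (\<lambda>n. Lv (n + 0) (d k))" using sd[of k] by simp
    show ?thesis unfolding \<open>(\<lambda>x. Kinf (F (rr k)) x - Syn c x) = Tl 0 (d k)\<close>
      using N_Tl[where k=0 and c="d k", OF dd(1)[of k] sd0] by simp
  qed
  have "(\<lambda>k. \<Sum>n. Lv n (d k)) \<longlonglongrightarrow> (\<Sum>n. (0::real))"
  proof -
    have "eventually (\<lambda>n. summable (\<lambda>k. norm (Lv k (d n)))) sequentially \<and>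
           summable (\<lambda>n. norm (0::real)) \<and>
           ((\<lambda>n. suminf (\<lambda>k. Lv k (d n))) \<longlongrightarrow> suminf (\<lambda>n. 0::real)) sequentially"
    proof (rule tannerys_theorem[where M="\<lambda>n. 2 * a ^ n"])
      show "\<And>k. (\<lambda>n. Lv k (d n)) \<longlonglongrightarrow> 0" by (rule dd(3))
      show "\<forall>\<^sub>F (k, n) in at_top \<times>\<^sub>F sequentially. norm (Lv k (d n)) \<le> 2 * a ^ k"
        using b by (intro always_eventually) (simp add: case_prod_beta)
      show "summable (\<lambda>n. 2 * a ^ n)" by (rule summable_a)
    qed simp
    then show ?thesis by blast
  qed
  then have t: "(\<lambda>k. \<Sum>n. Lv n (d k)) \<longlonglongrightarrow> 0" by simp
  have "(\<lambda>k. N (\<lambda>x. Kinf (F (rr k)) x - Syn c x)) \<longlonglongrightarrow> 0"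
    by (rule sandwich0[OF N_nonneg bnd t])
  then show "\<exists>r g. strict_mono r \<and> g \<in> L2 M \<and> (\<lambda>k. N (\<lambda>x. Kinf (F (r k)) x - g x)) \<longlonglongrightarrow> 0"
    using rr g by blast
qed

lemma Kop_compact: "compact_op M (Kop M m)"
  unfolding compact_op_def
proof (intro allI impI)
  fix F :: "nat \<Rightarrow> real \<Rightarrow> complex" assume FF: "\<forall>k. F k \<in> L2 M \<and> N (F k) \<le> 1"
  then have F: "\<And>k. F k \<in> L2 M" "\<And>k. N (F k) \<le> 1" by auto
  obtain rr c where rr: "strict_mono rr" and cv: "\<And>w. (\<lambda>k. coef (F (rr k)) w) \<longlonglongrightarrow> c w"
    and gc: "good 1 c" and Lc: "\<And>n. Lv n c \<le> a ^ n"
    using compact_setup[where F=F, OF F] by blast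
  define d where "d = (\<lambda>k w. coef (F (rr k)) w - c w)"
  note dd = compact_core[where F=F and d=d, OF F rr cv gc Lc d_def]
  define g where "g = (\<lambda>x. \<Sum>n\<le>m. lev n c x)"
  have g: "g \<in> L2 M" unfolding g_def by (intro L2_sum lev_L2)
  have bnd: "N (\<lambda>x. Kop M m (F (rr k)) x - g x) \<le> (\<Sum>n\<le>m. Lv n (d k))" for k
  proof -
    have "(\<lambda>x. Kop M m (F (rr k)) x - g x) = (\<lambda>x. \<Sum>n\<le>m. lev n (d k) x)"
      unfolding Kop_fun g_def d_def by (rule ext) (simp add: lev_diff sum_subtractf)
    then have "N (\<lambda>x. Kop M m (F (rr k)) x - g x) = N (\<lambda>x. \<Sum>n\<le>m. lev n (d k) x)" by simp
    also have "\<dots> \<le> (\<Sum>n\<le>m. N (lev n (d k)))" by (intro N_sum lev_L2)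
    finally show ?thesis by (simp add: N_lev)
  qed
  have t: "(\<lambda>k. \<Sum>n\<le>m. Lv n (d k)) \<longlonglongrightarrow> 0"
    using tendsto_sum[of "{..m}" "\<lambda>n k. Lv n (d k)" "\<lambda>n. 0" sequentially] dd(3) by simp
  have "(\<lambda>k. N (\<lambda>x. Kop M m (F (rr k)) x - g x)) \<longlonglongrightarrow> 0"
    by (rule sandwich0[OF N_nonneg bnd t])
  then show "\<exists>r g. strict_mono r \<and> g \<in> L2 M \<and> (\<lambda>k. N (\<lambda>x. Kop M m (F (r k)) x - g x)) \<longlonglongrightarrow> 0"
    using rr g by blast
qed

end

context mup
begin

lemma K_aeq:
  assumes bl: "bounded_lin_op M K" and lim: "(\<lambda>m. opnorm M (op_diff K (Kop M m))) \<longlonglongrightarrow> 0"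
  shows "aeq K Kinf"
proof -
  obtain B where B: "\<And>f. f \<in> L2 M \<Longrightarrow> N (K f) \<le> B * N f" using bl unfolding bounded_lin_op_def by blast
  have KL2: "\<And>f. f \<in> L2 M \<Longrightarrow> K f \<in> L2 M" using bl unfolding bounded_lin_op_def by blast
  have Klin: "\<And>f g c. f \<in> L2 M \<Longrightarrow> g \<in> L2 M \<Longrightarrow>
      N (\<lambda>x. K (\<lambda>y. c * f y + g y) x - (c * K f x + K g x)) = 0"
    using bl unfolding bounded_lin_op_def by blast
  have IL2: "\<And>f. f \<in> L2 M \<Longrightarrow> Kinf f \<in> L2 M" by (rule lin_L2[OF Kinf_lin_op])
  obtain BI where BI: "0 \<le> BI" "\<And>f. f \<in> L2 M \<Longrightarrow> N (Kinf f) \<le> BI * N f"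
    using lin_bound[OF Kinf_lin_op] by blast
  have K0: "N (K (\<lambda>x. 0)) = 0" using B[OF L2_zero] N_nonneg[of "K (\<lambda>x. 0)"] by simp
  have unit: "N (\<lambda>x. K u x - Kinf u x) = 0" if u: "u \<in> L2 M" "N u \<le> 1" for u
  proof -
    have bnd: "N (\<lambda>x. K u x - Kinf u x) \<le> opnorm M (op_diff K (Kop M m)) + tm m" for m
    proof -
      obtain C where C: "\<And>f. f \<in> L2 M \<Longrightarrow> N f \<le> 1 \<Longrightarrow> N (Kop M m f) \<le> C"
        using lin_unit[OF Kop_lin_op] by blast
      have Cd: "N (op_diff K (Kop M m) f) \<le> max B 0 + C" if "f \<in> L2 M" "N f \<le> 1" for f
      proof -
        have "N (op_diff K (Kop M m) f) \<le> N (K f) + N (Kop M m f)" unfolding op_diff_def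
          by (rule N_diff[OF KL2[OF that(1)] lin_L2[OF Kop_lin_op that(1)]])
        moreover have "N (K f) \<le> max B 0"
        proof -
          have "N (K f) \<le> B * N f" by (rule B[OF that(1)])
          also have "\<dots> \<le> max B 0 * N f" by (rule mult_right_mono[OF _ N_nonneg]) simp
          also have "\<dots> \<le> max B 0 * 1" by (rule mult_left_mono[OF that(2)]) simp
          finally show ?thesis by simp
        qed
        ultimately show ?thesis using C[OF that] by simp
      qed
      have Km: "Kop M m u \<in> L2 M" by (rule lin_L2[OF Kop_lin_op u(1)])
      have "N (\<lambda>x. K u x - Kinf u x) \<le> N (\<lambda>x. K u x - Kop M m u x) + N (\<lambda>x. Kop M m u x - Kinf u x)"
        by (rule N_tri[OF KL2[OF u(1)] Km IL2[OF u(1)]])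
      moreover have "N (\<lambda>x. K u x - Kop M m u x) \<le> opnorm M (op_diff K (Kop M m))"
        using opnorm_ge[OF Cd u] unfolding op_diff_def .
      moreover have "N (\<lambda>x. Kop M m u x - Kinf u x) \<le> tm m"
      proof -
        have "N (\<lambda>x. Kop M m u x - Kinf u x) = N (op_diff Kinf (Kop M m) u)"
          unfolding op_diff_def by (rule N_commute)
        also have "\<dots> \<le> tm m * N u" by (rule N_Kinf_diff[OF u(1)])
        also have "\<dots> \<le> tm m * 1" by (rule mult_left_mono[OF u(2) tm_nonneg])
        finally show ?thesis by simp
      qed
      ultimately show ?thesis by linarith
    qed
    have "(\<lambda>m. opnorm M (op_diff K (Kop M m)) + tm m) \<longlonglongrightarrow> 0 + 0" by (intro tendsto_add lim tm_lim)
    then have "N (\<lambda>x. K u x - Kinf u x) \<le> 0"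
      using bnd by (intro LIMSEQ_le_const[of "\<lambda>m. opnorm M (op_diff K (Kop M m)) + tm m"]) auto
    then show ?thesis using N_nonneg by (simp add: antisym)
  qed
  show ?thesis unfolding aeq_def
  proof (intro ballI conjI)
    fix f assume f: "f \<in> L2 M"
    show "K f \<in> L2 M" by (rule KL2[OF f])
    show "Kinf f \<in> L2 M" by (rule IL2[OF f])
    show "N (\<lambda>x. K f x - Kinf f x) = 0"
    proof (cases "N f = 0")
      case True
      have "N (\<lambda>x. K f x - Kinf f x) \<le> N (K f) + N (Kinf f)" by (rule N_diff[OF KL2[OF f] IL2[OF f]])
      also have "\<dots> \<le> B * N f + BI * N f" by (intro add_mono B[OF f] BI(2)[OF f])
      finally show ?thesis using True N_nonneg by (simp add: antisym)
    next
      case False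
      then have nf: "N f > 0" using N_nonneg[of f] by simp
      define c where "c = complex_of_real (N f)"
      define u where "u = (\<lambda>y. complex_of_real (1 / N f) * f y)"
      have u: "u \<in> L2 M" unfolding u_def by (rule L2_scale[OF f])
      have Nu: "N u = 1" unfolding u_def N_scale using nf by (simp add: norm_divide)
      have fu: "(\<lambda>y. c * u y + 0) = f" unfolding c_def u_def using nf by (auto simp: field_simps)
      have fu': "(\<lambda>y. c * u y) = f" using fu by simp
      have Ku: "N (\<lambda>x. K u x - Kinf u x) = 0" by (rule unit[OF u]) (simp add: Nu)
      have cKu: "(\<lambda>x. c * K u x) \<in> L2 M" by (rule L2_scale[OF KL2[OF u]])
      have cIu: "(\<lambda>x. c * Kinf u x) \<in> L2 M" by (rule L2_scale[OF IL2[OF u]])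
      have s1: "N (\<lambda>x. K f x - c * K u x) = 0"
      proof -
        have a: "N (\<lambda>x. K f x - (c * K u x + K (\<lambda>x. 0) x)) = 0"
          using Klin[OF u L2_zero, of c] unfolding fu .
        have "N (\<lambda>x. K f x - c * K u x) \<le> N (\<lambda>x. K f x - (c * K u x + K (\<lambda>x. 0) x)) + N (\<lambda>x. (c * K u x + K (\<lambda>x. 0) x) - c * K u x)"
          by (rule N_tri[OF KL2[OF f] L2_add[OF cKu KL2[OF L2_zero]] cKu])
        also have "N (\<lambda>x. (c * K u x + K (\<lambda>x. 0) x) - c * K u x) = 0" using K0 by simp
        finally show ?thesis using a N_nonneg by (simp add: antisym)
      qed
      have s2: "N (\<lambda>x. c * K u x - c * Kinf u x) = 0"
      proof -
        have "N (\<lambda>x. c * K u x - c * Kinf u x) = N (\<lambda>x. c * (K u x - Kinf u x))"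
          by (simp add: right_diff_distrib)
        also have "\<dots> = 0" unfolding N_scale Ku by simp
        finally show ?thesis .
      qed
      have s3: "(\<lambda>x. c * Kinf u x) = Kinf f"
        using lin_scale[OF Kinf_lin_op u, of c] unfolding fu' by simp
      have "N (\<lambda>x. K f x - Kinf f x) \<le> N (\<lambda>x. K f x - c * K u x) + N (\<lambda>x. c * K u x - Kinf f x)"
        by (rule N_tri[OF KL2[OF f] cKu IL2[OF f]])
      also have "N (\<lambda>x. c * K u x - Kinf f x) = 0" using s2 unfolding s3[symmetric] .
      finally show ?thesis using s1 N_nonneg by (simp add: antisym)
    qed
  qed
qed

lemma opnorm_aeq: assumes ae: "aeq K K'" and U: "lin_op U"
  shows "opnorm M (op_diff K U) = opnorm M (op_diff K' U)"
proof (rule opnorm_cong)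
  fix f assume f: "f \<in> L2 M"
  have a: "K f \<in> L2 M" "K' f \<in> L2 M" "N (\<lambda>x. K f x - K' f x) = 0" using ae f unfolding aeq_def by auto
  have Uf: "U f \<in> L2 M" by (rule lin_L2[OF U f])
  have "N (\<lambda>x. K f x - U f x) \<le> N (\<lambda>x. K f x - K' f x) + N (\<lambda>x. K' f x - U f x)"
    by (rule N_tri[OF a(1) a(2) Uf])
  moreover have "N (\<lambda>x. K' f x - U f x) \<le> N (\<lambda>x. K' f x - K f x) + N (\<lambda>x. K f x - U f x)"
    by (rule N_tri[OF a(2) a(1) Uf])
  moreover have "N (\<lambda>x. K' f x - K f x) = 0" using a(3) N_commute by metis
  ultimately show "N (op_diff K U f) = N (op_diff K' U f)" unfolding op_diff_def using a(3) by linarith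
qed

lemma Kinf_props: "lin_op Kinf" "selfadjoint_op M Kinf" "positive_op M Kinf" "compact_op M Kinf"
  by (rule Kinf_lin_op Kinf_sa Kinf_pos Kinf_compact)+

lemma lam_Kinf: "lambda_max M Kinf = Mq Kinf"
  by (rule lambda_max_Mq[OF Kinf_props])

lemma lam_Kop: "lambda_max M (Kop M m) = Mq (Kop M m)"
  by (rule lambda_max_Mq[OF Kop_lin_op Kop_sa Kop_pos Kop_compact])

lemma lam_diff: "\<bar>Mq Kinf - Mq (Kop M m)\<bar> \<le> tm m"
  using weyl[OF Kinf_lin_op Kop_lin_op, of m] opnorm_Kinf_diff[of m] by linarith

lemma opnorm_DE_lim: "(\<lambda>m. opnorm M (op_diff Kinf (DE_partial M m))) \<longlonglongrightarrow> 0"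
  unfolding opnorm_DE by (rule sandwich0[OF opnorm_Kinf_diff_nonneg opnorm_Kinf_diff tm_lim])

lemma main:
  shows "(\<exists>K. bounded_lin_op M K \<and>
            (\<lambda>m. opnorm M (op_diff K (DE_partial M m))) \<longlonglongrightarrow> 0) \<and>
         (\<forall>K. bounded_lin_op M K \<and> (\<lambda>m. opnorm M (op_diff K (DE_partial M m))) \<longlonglongrightarrow> 0 \<longrightarrow>
            (\<forall>m. opnorm M (op_diff K (Kop M m)) \<le> (\<Sum>n. (max p (1 - p)) ^ (n + m + 1)) \<and>
                 (\<Sum>n. (max p (1 - p)) ^ (n + m + 1)) = (max p (1 - p)) ^ (m + 1) / (1 - max p (1 - p))) \<and>
            compact_op M K \<and> positive_op M K \<and> selfadjoint_op M K \<and>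
            (\<lambda>m. lambda_max M (Kop M m)) \<longlonglongrightarrow> lambda_max M K \<and>
            (\<forall>m. \<bar>lambda_max M K - lambda_max M (Kop M m)\<bar> \<le> (max p (1 - p)) ^ (m + 1) / (1 - max p (1 - p))))"
proof (intro conjI allI impI)
  show "\<exists>K. bounded_lin_op M K \<and> (\<lambda>m. opnorm M (op_diff K (DE_partial M m))) \<longlonglongrightarrow> 0"
    using lin_bounded_lin_op[OF Kinf_lin_op] opnorm_DE_lim by blast
next
  fix K assume H: "bounded_lin_op M K \<and> (\<lambda>m. opnorm M (op_diff K (DE_partial M m))) \<longlonglongrightarrow> 0"
  then have bl: "bounded_lin_op M K" and lim: "(\<lambda>m. opnorm M (op_diff K (Kop M m))) \<longlonglongrightarrow> 0"
    by (auto simp: opnorm_DE)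
  have ae: "aeq K Kinf" by (rule K_aeq[OF bl lim])
  have onK: "opnorm M (op_diff K (Kop M m)) = opnorm M (op_diff Kinf (Kop M m))" for m
    by (rule opnorm_aeq[OF ae Kop_lin_op])
  have lamK: "lambda_max M K = Mq Kinf" using lambda_transfer[OF ae] lam_Kinf by simp
  fix m
  show "opnorm M (op_diff K (Kop M m)) \<le> (\<Sum>n. (max p (1 - p)) ^ (n + m + 1))"
    using onK opnorm_Kinf_diff[of m] unfolding tm_def by simp
  show "(\<Sum>n. (max p (1 - p)) ^ (n + m + 1)) = (max p (1 - p)) ^ (m + 1) / (1 - max p (1 - p))"
    using tm_eq[of m] unfolding tm_def .
  show "compact_op M K" by (rule compact_transfer[OF ae Kinf_compact])
  show "positive_op M K" by (rule pos_transfer[OF ae Kinf_pos])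
  show "selfadjoint_op M K" by (rule sa_transfer[OF ae Kinf_sa])
  show "\<bar>lambda_max M K - lambda_max M (Kop M m)\<bar> \<le> (max p (1 - p)) ^ (m + 1) / (1 - max p (1 - p))"
    unfolding lamK lam_Kop tm_eq[symmetric] by (rule lam_diff)
next
  fix K assume H: "bounded_lin_op M K \<and> (\<lambda>m. opnorm M (op_diff K (DE_partial M m))) \<longlonglongrightarrow> 0"
  then have bl: "bounded_lin_op M K" and lim: "(\<lambda>m. opnorm M (op_diff K (Kop M m))) \<longlonglongrightarrow> 0"
    by (auto simp: opnorm_DE)
  have ae: "aeq K Kinf" by (rule K_aeq[OF bl lim])
  have lamK: "lambda_max M K = Mq Kinf" using lambda_transfer[OF ae] lam_Kinf by simp
  have "(\<lambda>m. \<bar>Mq (Kop M m) - Mq Kinf\<bar>) \<longlonglongrightarrow> 0"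
    by (rule sandwich0[OF abs_ge_zero _ tm_lim]) (use lam_diff in \<open>simp add: abs_minus_commute\<close>)
  then have "(\<lambda>m. Mq (Kop M m) - Mq Kinf) \<longlonglongrightarrow> 0" by (simp add: tendsto_rabs_zero_iff)
  then have "(\<lambda>m. Mq (Kop M m)) \<longlonglongrightarrow> Mq Kinf" by (simp add: LIM_zero_iff)
  then show "(\<lambda>m. lambda_max M (Kop M m)) \<longlonglongrightarrow> lambda_max M K" unfolding lamK lam_Kop .
qed

end

theorem proposition5p1:
  fixes p :: real and M :: "real measure"
  assumes "0 < p" and "p < 1" and "is_mu_p p M"
  shows "(\<exists>K. bounded_lin_op M K \<and>
            (\<lambda>m. opnorm M (op_diff K (DE_partial M m))) \<longlonglongrightarrow> 0) \<and>
         (\<forall>K. bounded_lin_op M K \<and> (\<lambda>m. opnorm M (op_diff K (DE_partial M m))) \<longlonglongrightarrow> 0 \<longrightarrow>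
            (\<forall>m. opnorm M (op_diff K (Kop M m)) \<le> (\<Sum>n. (max p (1 - p)) ^ (n + m + 1)) \<and>
                 (\<Sum>n. (max p (1 - p)) ^ (n + m + 1)) = (max p (1 - p)) ^ (m + 1) / (1 - max p (1 - p))) \<and>
            compact_op M K \<and> positive_op M K \<and> selfadjoint_op M K \<and>
            (\<lambda>m. lambda_max M (Kop M m)) \<longlonglongrightarrow> lambda_max M K \<and>
            (\<forall>m. \<bar>lambda_max M K - lambda_max M (Kop M m)\<bar> \<le> (max p (1 - p)) ^ (m + 1) / (1 - max p (1 - p))))"
proof -
  interpret mup p M by unfold_locales (rule assms)+
  show ?thesis by (rule main)
qed

end
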